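(* Let $M^{2n+1}(f,Q,\xi,\eta,g)$ be a weak $\beta$-Kenmotsu manifold with $\beta$ a nonzero constant, and suppose $\nabla_\xi\mathrm{Ric}^\sharp=0$. Then $(M,g)$ is an Einstein manifold with scalar curvature $r=-2n(2n+1)\beta^2$.
   Context: A weak almost contact metric structure on $M^{2n+1}$ consists of a $(1,1)$-tensor field $f$ of rank $2n$, a vector field $\xi$, a $1$-form $\eta$, a nonsingular $(1,1)$-tensor field $Q$ and a Riemannian metric $g$ such that $f^2=-Q+\eta\otimes\xi$, $\eta(\xi)=1$, $Q\xi=\xi$, $\ker\eta$ is $f$-invariant, and $g(fX,fY)=g(X,QY)-\eta(X)\eta(Y)$. It is weak $\beta$-Kenmotsu if $(\nabla_Xf)Y=\beta\{g(fX,Y)\xi-\eta(Y)fX\}$ for all $X,Y$, $\nabla$ the Levi-Civita connection. $R_{X,Y}Z=\nabla_X\nabla_YZ-\nabla_Y\nabla_XZ-\nabla_{[X,Y]}Z$, $\mathrm{Ric}(X,Y)=\operatorname{tr}(Z\mapsto R_{Z,X}Y)=g(\mathrm{Ric}^\sharp X,Y)$, $r=\operatorname{tr}_g\mathrm{Ric}$. *)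

theory Defs
  imports "HOL-Analysis.Analysis"
begin

text \<open>Local-coordinate model: the manifold is an open set U in real^'m (a chart),
  tensor fields are matrix/vector valued functions on U, the metric g is a
  symmetric positive definite matrix field, the Levi-Civita connection is given
  by the Christoffel symbols of g.\<close>

fun pder :: "'m::finite list \<Rightarrow> (real^'m \<Rightarrow> 'b::real_normed_vector) \<Rightarrow> real^'m \<Rightarrow> 'b" where
  "pder [] F = F"
| "pder (k # ks) F = (\<lambda>x. frechet_derivative (pder ks F) (at x) (axis k 1))"

definition smooth_on :: "(real^'m::finite) set \<Rightarrow> (real^'m \<Rightarrow> 'b::real_normed_vector) \<Rightarrow> bool" where
  "smooth_on U F \<longleftrightarrow> (\<forall>ks. \<forall>x\<in>U. pder ks F differentiable (at x))"

definition dirD :: "(real^'m::finite \<Rightarrow> 'b::real_normed_vector) \<Rightarrow> (real^'m \<Rightarrow> real^'m) \<Rightarrow> real^'m \<Rightarrow> 'b" where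
  "dirD F X x = frechet_derivative F (at x) (X x)"

definition gmet :: "real^'m^'m \<Rightarrow> real^'m \<Rightarrow> real^'m \<Rightarrow> real" where
  "gmet G u v = u \<bullet> (G *v v)"

definition riemannian_metric_on :: "(real^'m::finite) set \<Rightarrow> (real^'m \<Rightarrow> real^'m^'m) \<Rightarrow> bool" where
  "riemannian_metric_on U g \<longleftrightarrow> smooth_on U g \<and>
     (\<forall>x\<in>U. transpose (g x) = g x \<and> (\<forall>v. v \<noteq> 0 \<longrightarrow> gmet (g x) v v > 0))"

definition christoffel :: "(real^'m::finite \<Rightarrow> real^'m^'m) \<Rightarrow> real^'m \<Rightarrow> 'm \<Rightarrow> 'm \<Rightarrow> 'm \<Rightarrow> real" where
  "christoffel g x k i j = (1/2) * (\<Sum>l\<in>UNIV. matrix_inv (g x) $ k $ l *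
      (pder [i] (\<lambda>y. g y $ j $ l) x + pder [j] (\<lambda>y. g y $ i $ l) x - pder [l] (\<lambda>y. g y $ i $ j) x))"

definition nabla :: "(real^'m::finite \<Rightarrow> real^'m^'m) \<Rightarrow> (real^'m \<Rightarrow> real^'m) \<Rightarrow> (real^'m \<Rightarrow> real^'m) \<Rightarrow> real^'m \<Rightarrow> real^'m" where
  "nabla g X Y x = dirD Y X x + (\<chi> k. \<Sum>i\<in>UNIV. \<Sum>j\<in>UNIV. christoffel g x k i j * X x $ i * Y x $ j)"

definition lie :: "(real^'m::finite \<Rightarrow> real^'m) \<Rightarrow> (real^'m \<Rightarrow> real^'m) \<Rightarrow> real^'m \<Rightarrow> real^'m" where
  "lie X Y x = dirD Y X x - dirD X Y x"

definition curv :: "(real^'m::finite \<Rightarrow> real^'m^'m) \<Rightarrow> (real^'m \<Rightarrow> real^'m) \<Rightarrow> (real^'m \<Rightarrow> real^'m) \<Rightarrow> (real^'m \<Rightarrow> real^'m) \<Rightarrow> real^'m \<Rightarrow> real^'m" where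
  "curv g X Y Z x = nabla g X (nabla g Y Z) x - nabla g Y (nabla g X Z) x - nabla g (lie X Y) Z x"

definition coord :: "'m::finite \<Rightarrow> real^'m \<Rightarrow> real^'m" where
  "coord k = (\<lambda>_. axis k 1)"

definition ricci :: "(real^'m::finite \<Rightarrow> real^'m^'m) \<Rightarrow> (real^'m \<Rightarrow> real^'m) \<Rightarrow> (real^'m \<Rightarrow> real^'m) \<Rightarrow> real^'m \<Rightarrow> real" where
  "ricci g X Y x = (\<Sum>k\<in>UNIV. curv g (coord k) X Y x $ k)"

definition ricci_mat :: "(real^'m::finite \<Rightarrow> real^'m^'m) \<Rightarrow> real^'m \<Rightarrow> real^'m^'m" where
  "ricci_mat g x = (\<chi> i j. ricci g (coord i) (coord j) x)"

text \<open>Ric^sharp, defined by g(Ric^sharp X, Y) = Ric(X,Y).\<close>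
definition ricci_sharp :: "(real^'m::finite \<Rightarrow> real^'m^'m) \<Rightarrow> real^'m \<Rightarrow> real^'m^'m" where
  "ricci_sharp g x = matrix_inv (g x) ** transpose (ricci_mat g x)"

definition scal :: "(real^'m::finite \<Rightarrow> real^'m^'m) \<Rightarrow> real^'m \<Rightarrow> real" where
  "scal g x = (\<Sum>i\<in>UNIV. \<Sum>j\<in>UNIV. matrix_inv (g x) $ i $ j * ricci_mat g x $ i $ j)"

text \<open>Weak almost contact metric structure (f,Q,xi,eta,g) on U, dim = 2n+1.
  eta is represented by its component vector: eta(X) = eta \<bullet> X.\<close>
definition weak_almost_contact_metric :: "nat \<Rightarrow> (real^'m::finite) set \<Rightarrow> (real^'m \<Rightarrow> real^'m^'m) \<Rightarrow>
    (real^'m \<Rightarrow> real^'m^'m) \<Rightarrow> (real^'m \<Rightarrow> real^'m) \<Rightarrow> (real^'m \<Rightarrow> real^'m) \<Rightarrow> (real^'m \<Rightarrow> real^'m^'m) \<Rightarrow> bool" where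
  "weak_almost_contact_metric n U f Q \<xi> \<eta> g \<longleftrightarrow>
     CARD('m) = 2 * n + 1 \<and> open U \<and>
     smooth_on U f \<and> smooth_on U Q \<and> smooth_on U \<xi> \<and> smooth_on U \<eta> \<and> riemannian_metric_on U g \<and>
     (\<forall>x\<in>U.
        rank (f x) = 2 * n \<and>
        f x ** f x = - Q x + (\<chi> i j. \<xi> x $ i * \<eta> x $ j) \<and>
        \<eta> x \<bullet> \<xi> x = 1 \<and>
        Q x *v \<xi> x = \<xi> x \<and>
        invertible (Q x) \<and>
        (\<forall>v. \<eta> x \<bullet> v = 0 \<longrightarrow> \<eta> x \<bullet> (f x *v v) = 0) \<and>
        (\<forall>u v. gmet (g x) (f x *v u) (f x *v v) = gmet (g x) u (Q x *v v) - (\<eta> x \<bullet> u) * (\<eta> x \<bullet> v)))"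

definition weak_beta_kenmotsu :: "nat \<Rightarrow> (real^'m::finite) set \<Rightarrow> real \<Rightarrow> (real^'m \<Rightarrow> real^'m^'m) \<Rightarrow>
    (real^'m \<Rightarrow> real^'m^'m) \<Rightarrow> (real^'m \<Rightarrow> real^'m) \<Rightarrow> (real^'m \<Rightarrow> real^'m) \<Rightarrow> (real^'m \<Rightarrow> real^'m^'m) \<Rightarrow> bool" where
  "weak_beta_kenmotsu n U \<beta> f Q \<xi> \<eta> g \<longleftrightarrow>
     weak_almost_contact_metric n U f Q \<xi> \<eta> g \<and>
     (\<forall>X Y. smooth_on U X \<longrightarrow> smooth_on U Y \<longrightarrow> (\<forall>x\<in>U.
        nabla g X (\<lambda>y. f y *v Y y) x - f x *v nabla g X Y x
          = \<beta> *\<^sub>R (gmet (g x) (f x *v X x) (Y x) *\<^sub>R \<xi> x - (\<eta> x \<bullet> Y x) *\<^sub>R (f x *v X x))))"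

end

theory Submission
  imports Defs
begin


lemma has_derivative_local_iff:
  assumes "open U" "x \<in> U" "\<forall>y\<in>U. F y = H y"
  shows "(F has_derivative D) (at x) \<longleftrightarrow> (H has_derivative D) (at x)"
  using assms has_derivative_transform_within_open[of F D x UNIV U H]
    has_derivative_transform_within_open[of H D x UNIV U F] by auto

lemma fd_local:
  assumes "open U" "x \<in> U" "\<forall>y\<in>U. F y = H y"
  shows "frechet_derivative F (at x) = frechet_derivative H (at x)"
  unfolding frechet_derivative_def using has_derivative_local_iff[OF assms] by simp

lemma diff_local:
  assumes "open U" "x \<in> U" "\<forall>y\<in>U. F y = H y"
  shows "F differentiable (at x) \<longleftrightarrow> H differentiable (at x)"
  unfolding differentiable_def using has_derivative_local_iff[OF assms] by simp

lemma pder_local: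
  assumes "open U" "\<forall>y\<in>U. F y = H y"
  shows "\<forall>x\<in>U. pder ks F x = pder ks H x"
proof (induction ks)
  case Nil then show ?case using assms by simp
next
  case (Cons k ks)
  show ?case using fd_local[OF assms(1) _ Cons] by simp
qed

lemma pder_append: "pder ks (pder [k] F) = pder (ks @ [k]) F"
  by (induction ks) auto

definition smN :: "nat \<Rightarrow> (real^'m::finite) set \<Rightarrow> (real^'m \<Rightarrow> 'b::real_normed_vector) \<Rightarrow> bool" where
  "smN N U F \<longleftrightarrow> (\<forall>ks. length ks \<le> N \<longrightarrow> (\<forall>x\<in>U. pder ks F differentiable (at x)))"

lemma smooth_on_smN: "smooth_on U F \<longleftrightarrow> (\<forall>N. smN N U F)"
  unfolding smooth_on_def smN_def by auto

lemma smN_0: "smN 0 U F \<longleftrightarrow> (\<forall>x\<in>U. F differentiable (at x))"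
  unfolding smN_def by auto

lemma smN_Suc: "smN (Suc N) U F \<longleftrightarrow> (\<forall>x\<in>U. F differentiable (at x)) \<and> (\<forall>k. smN N U (pder [k] F))"
proof
  assume A: "smN (Suc N) U F"
  show "(\<forall>x\<in>U. F differentiable (at x)) \<and> (\<forall>k. smN N U (pder [k] F))"
  proof
    show "\<forall>x\<in>U. F differentiable (at x)" using A unfolding smN_def
      by (metis le0 list.size(3) pder.simps(1))
    show "\<forall>k. smN N U (pder [k] F)" using A unfolding smN_def pder_append
      by (metis Suc_le_mono length_append_singleton)
  qed
next
  assume A: "(\<forall>x\<in>U. F differentiable (at x)) \<and> (\<forall>k. smN N U (pder [k] F))"
  show "smN (Suc N) U F" unfolding smN_def
  proof (intro allI impI)
    fix ks :: "'a list" assume "length ks \<le> Suc N"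
    then show "\<forall>x\<in>U. pder ks F differentiable at x"
    proof (cases ks rule: rev_exhaust)
      case Nil then show ?thesis using A by simp
    next
      case (snoc ys k)
      then have "length ys \<le> N" using \<open>length ks \<le> Suc N\<close> by simp
      then show ?thesis using A snoc unfolding smN_def by (metis pder_append)
    qed
  qed
qed

lemma smN_mono: "smN (Suc N) U F \<Longrightarrow> smN N U F"
  unfolding smN_def by auto

lemma smN_le: "smN N U F \<Longrightarrow> M \<le> N \<Longrightarrow> smN M U F"
  unfolding smN_def by auto

lemma smN_cong:
  assumes "open U" "\<forall>y\<in>U. F y = H y" "smN N U F"
  shows "smN N U H"
  unfolding smN_def
proof (intro allI impI ballI)
  fix ks :: "'a list" and x assume "length ks \<le> N" "x \<in> U"
  then have "pder ks F differentiable at x" using assms(3) unfolding smN_def by auto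
  then show "pder ks H differentiable at x"
    using diff_local[OF assms(1) \<open>x\<in>U\<close> pder_local[OF assms(1,2)]] by simp
qed

lemma smooth_on_cong:
  assumes "open U" "\<forall>y\<in>U. F y = H y" "smooth_on U F"
  shows "smooth_on U H"
  using assms smN_cong unfolding smooth_on_smN by blast

lemma pder1_has: "(F has_derivative D) (at x) \<Longrightarrow> pder [k] F x = D (axis k 1)"
  using frechet_derivative_at by force

lemma pder1_diff: "F differentiable (at x) \<Longrightarrow> (F has_derivative (frechet_derivative F (at x))) (at x)"
  using frechet_derivative_works by blast


lemma diff_lin: "bounded_linear L \<Longrightarrow> F differentiable at x \<Longrightarrow> (\<lambda>y. L (F y)) differentiable at x"
  by (rule differentiable_compose[of L]) (auto intro: bounded_linear_imp_differentiable)

lemma diff_bil: "bounded_bilinear P \<Longrightarrow> F differentiable at x \<Longrightarrow> H differentiable at x \<Longrightarrow> (\<lambda>y. P (F y) (H y)) differentiable at x"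
  unfolding differentiable_def using bounded_bilinear.FDERIV by blast

lemma pder_linear:
  assumes "bounded_linear L" "F differentiable at x"
  shows "pder [k] (\<lambda>y. L (F y)) x = L (pder [k] F x)"
proof -
  have "(F has_derivative frechet_derivative F (at x)) (at x)" using assms pder1_diff by blast
  then have "((\<lambda>y. L (F y)) has_derivative (\<lambda>v. L (frechet_derivative F (at x) v))) (at x)"
    using bounded_linear.has_derivative[OF assms(1)] by blast
  then show ?thesis using pder1_has by (metis pder.simps)
qed

lemma smN_linear:
  assumes "open U" "bounded_linear L"
  shows "smN N U F \<Longrightarrow> smN N U (\<lambda>y. L (F y))"
proof (induction N arbitrary: F)
  case 0 then show ?case unfolding smN_0 using diff_lin[OF assms(2)] by blast
next
  case (Suc N)
  have d: "\<forall>x\<in>U. F differentiable at x" using Suc.prems smN_Suc by blast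
  have "\<forall>x\<in>U. (\<lambda>y. L (F y)) differentiable at x"
    using d diff_lin[OF assms(2)] by blast
  moreover have "smN N U (pder [k] (\<lambda>y. L (F y)))" for k
  proof -
    have e: "\<forall>y\<in>U. L (pder [k] F y) = pder [k] (\<lambda>y. L (F y)) y"
      using d pder_linear[OF assms(2), symmetric] by blast
    have "smN N U (pder [k] F)" using Suc.prems smN_Suc by blast
    then have "smN N U (\<lambda>y. L (pder [k] F y))" using Suc.IH by blast
    then show ?thesis using smN_cong[OF assms(1) e] by blast
  qed
  ultimately show ?case using smN_Suc by blast
qed

lemma pder_add:
  assumes "F differentiable at x" "H differentiable at x"
  shows "pder [k] (\<lambda>y. F y + H y) x = pder [k] F x + pder [k] H x"
proof -
  have "((\<lambda>y. F y + H y) has_derivative (\<lambda>v. frechet_derivative F (at x) v + frechet_derivative H (at x) v)) (at x)"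
    using has_derivative_add[OF pder1_diff[OF assms(1)] pder1_diff[OF assms(2)]] .
  from pder1_has[OF this, of k] show ?thesis by simp
qed

lemma pder_bilinear:
  assumes "bounded_bilinear P" "F differentiable at x" "H differentiable at x"
  shows "pder [k] (\<lambda>y. P (F y) (H y)) x = P (pder [k] F x) (H x) + P (F x) (pder [k] H x)"
proof -
  have "((\<lambda>y. P (F y) (H y)) has_derivative (\<lambda>v. P (F x) (frechet_derivative H (at x) v) + P (frechet_derivative F (at x) v) (H x))) (at x)"
    using bounded_bilinear.FDERIV[OF assms(1) pder1_diff[OF assms(2)] pder1_diff[OF assms(3)]] .
  from pder1_has[OF this, of k] show ?thesis by (simp add: add.commute)
qed

lemma smN_const: "smN N U (\<lambda>y. c)"
proof (induction N arbitrary: c)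
  case 0 then show ?case unfolding smN_0 by simp
next
  case (Suc N)
  have "pder [k] (\<lambda>y. c) = (\<lambda>y. 0)" for k by (rule ext) simp
  then show ?case using Suc smN_Suc[of N U "\<lambda>y. c"] by simp
qed

lemma smN_add:
  assumes "open U"
  shows "smN N U F \<Longrightarrow> smN N U H \<Longrightarrow> smN N U (\<lambda>y. F y + H y)"
proof (induction N arbitrary: F H)
  case 0 then show ?case unfolding smN_0 using differentiable_add by blast
next
  case (Suc N)
  have d: "\<forall>x\<in>U. F differentiable at x" "\<forall>x\<in>U. H differentiable at x" using Suc.prems smN_Suc by blast+
  have "smN N U (pder [k] (\<lambda>y. F y + H y))" for k
  proof -
    have e: "\<forall>y\<in>U. pder [k] F y + pder [k] H y = pder [k] (\<lambda>y. F y + H y) y"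
      using d pder_add[symmetric] by blast
    have "smN N U (pder [k] F)" "smN N U (pder [k] H)" using Suc.prems smN_Suc by blast+
    then have "smN N U (\<lambda>y. pder [k] F y + pder [k] H y)" using Suc.IH by blast
    then show ?thesis using smN_cong[OF assms(1) e] by blast
  qed
  moreover have "\<forall>x\<in>U. (\<lambda>y. F y + H y) differentiable at x" using d differentiable_add by blast
  ultimately show ?case using smN_Suc by blast
qed

lemma smN_bilinear:
  assumes "open U" "bounded_bilinear P"
  shows "smN N U F \<Longrightarrow> smN N U H \<Longrightarrow> smN N U (\<lambda>y. P (F y) (H y))"
proof (induction N arbitrary: F H)
  case 0 then show ?case unfolding smN_0
    using diff_bil[OF assms(2)] by blast
next
  case (Suc N)
  have d: "\<forall>x\<in>U. F differentiable at x" "\<forall>x\<in>U. H differentiable at x" using Suc.prems smN_Suc by blast+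
  have "smN N U (pder [k] (\<lambda>y. P (F y) (H y)))" for k
  proof -
    have e: "\<forall>y\<in>U. P (pder [k] F y) (H y) + P (F y) (pder [k] H y) = pder [k] (\<lambda>y. P (F y) (H y)) y"
      using d pder_bilinear[OF assms(2), symmetric] by blast
    have a: "smN N U (pder [k] F)" "smN N U (pder [k] H)"
      using Suc.prems smN_Suc by blast+
    have b: "smN N U F" "smN N U H" using Suc.prems smN_mono by blast+
    have "smN N U (\<lambda>y. P (pder [k] F y) (H y))" using Suc.IH[OF a(1) b(2)] .
    moreover have "smN N U (\<lambda>y. P (F y) (pder [k] H y))" using Suc.IH[OF b(1) a(2)] .
    ultimately have "smN N U (\<lambda>y. P (pder [k] F y) (H y) + P (F y) (pder [k] H y))"
      using smN_add[OF assms(1)] by blast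
    then show ?thesis using smN_cong[OF assms(1) e] by blast
  qed
  moreover have "\<forall>x\<in>U. (\<lambda>y. P (F y) (H y)) differentiable at x"
    using d diff_bil[OF assms(2)] by blast
  ultimately show ?case using smN_Suc by blast
qed

lemma smN_sum:
  assumes "open U" "finite S"
  shows "(\<And>i. i \<in> S \<Longrightarrow> smN N U (F i)) \<Longrightarrow> smN N U (\<lambda>y. \<Sum>i\<in>S. F i y)"
  using assms(2)
proof (induction S)
  case empty then show ?case using smN_const by simp
next
  case (insert a S)
  have "smN N U (\<lambda>y. F a y + (\<Sum>i\<in>S. F i y))" using insert smN_add[OF assms(1)] by blast
  then show ?case using insert by simp
qed

lemma smN_inverse:
  fixes h :: "real^'m::finite \<Rightarrow> real"
  assumes "open U" "\<forall>y\<in>U. h y \<noteq> 0"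
  shows "smN N U h \<Longrightarrow> smN N U (\<lambda>y. inverse (h y))"
proof (induction N)
  case 0
  have "(\<lambda>y. inverse (h y)) differentiable at x" if "x \<in> U" for x
  proof -
    have "h differentiable at x" using 0 that smN_0 by blast
    then show ?thesis using assms(2) that differentiable_inverse by blast
  qed
  then show ?case using smN_0 by blast
next
  case (Suc N)
  have d: "\<forall>x\<in>U. h differentiable at x" using Suc.prems smN_Suc by blast
  have di: "\<forall>x\<in>U. (\<lambda>y. inverse (h y)) differentiable at x"
    using d assms(2) differentiable_inverse by blast
  have "smN N U (pder [k] (\<lambda>y. inverse (h y)))" for k
  proof -
    have e: "\<forall>y\<in>U. - (pder [k] h y * (inverse (h y) * inverse (h y))) = pder [k] (\<lambda>y. inverse (h y)) y"
    proof
      fix y assume y: "y \<in> U"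
      have "(h has_derivative frechet_derivative h (at y)) (at y)" using d y pder1_diff by blast
      then have "((\<lambda>y. inverse (h y)) has_derivative (\<lambda>v. - (inverse (h y) * frechet_derivative h (at y) v * inverse (h y)))) (at y)"
        using has_derivative_inverse[where f=h and x=y] assms(2) y by simp
      then show "- (pder [k] h y * (inverse (h y) * inverse (h y))) = pder [k] (\<lambda>y. inverse (h y)) y"
        using pder1_has[of "\<lambda>y. inverse (h y)"] by (simp add: algebra_simps)
    qed
    have a: "smN N U (pder [k] h)" "smN N U h" using Suc.prems smN_Suc smN_mono by blast+
    have b: "smN N U (\<lambda>y. inverse (h y))" using Suc.IH a(2) by blast
    have "smN N U (\<lambda>y. inverse (h y) * inverse (h y))"
      using smN_bilinear[OF assms(1) bounded_bilinear_mult b b] .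
    then have "smN N U (\<lambda>y. pder [k] h y * (inverse (h y) * inverse (h y)))"
      using smN_bilinear[OF assms(1) bounded_bilinear_mult a(1)] by blast
    then have "smN N U (\<lambda>y. - (pder [k] h y * (inverse (h y) * inverse (h y))))"
      using smN_linear[OF assms(1) bounded_linear_minus[OF bounded_linear_ident]] by blast
    then show ?thesis using smN_cong[OF assms(1) e] by blast
  qed
  then show ?case using smN_Suc di by blast
qed


lemma clairaut_half:
  fixes F :: "real^'m::finite \<Rightarrow> 'b::real_normed_vector"
  assumes U: "open U" "x \<in> U" and dF: "\<forall>y\<in>U. F differentiable at y"
    and dA: "pder [a] F differentiable at x" and e: "e > 0"
  shows "\<exists>d>0. \<forall>h. 0 < h \<longrightarrow> h < d \<longrightarrow>
     norm (F (x + h *\<^sub>R axis a 1 + h *\<^sub>R axis b 1) - F (x + h *\<^sub>R axis a 1) - F (x + h *\<^sub>R axis b 1) + F x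
           - (h*h) *\<^sub>R pder [b,a] F x) \<le> 3*e*(h*h)"
proof -
  define Fa where "Fa = pder [a] F"
  define DA where "DA = frechet_derivative Fa (at x)"
  have hA: "(Fa has_derivative DA) (at x)" using dA pder1_diff unfolding Fa_def DA_def by blast
  then obtain d1 where d1: "d1 > 0" "\<forall>y. norm (y - x) < d1 \<longrightarrow> norm (Fa y - Fa x - DA (y - x)) \<le> e * norm (y - x)"
    using e unfolding has_derivative_at_alt by blast
  have linDA: "linear DA" using hA has_derivative_linear by blast
  obtain d2 where d2: "d2 > 0" "ball x d2 \<subseteq> U" using U open_contains_ball by blast
  define d where "d = min d1 d2 / 2"
  have "d > 0" using d1 d2 unfolding d_def by simp
  moreover have "norm (F (x + h *\<^sub>R axis a 1 + h *\<^sub>R axis b 1) - F (x + h *\<^sub>R axis a 1) - F (x + h *\<^sub>R axis b 1) + F x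
           - (h*h) *\<^sub>R pder [b,a] F x) \<le> 3*e*(h*h)" if h: "0 < h" "h < d" for h
  proof -
    define ea where "ea = (axis a 1 :: real^'m)"
    define eb where "eb = (axis b 1 :: real^'m)"
    define C where "C = h *\<^sub>R DA eb"
    define p1 where "p1 s = x + s *\<^sub>R ea + h *\<^sub>R eb" for s
    define p0 where "p0 s = x + s *\<^sub>R ea" for s
    define g where "g s = F (p1 s) - F (p0 s) - s *\<^sub>R C" for s
    have np1: "norm (p1 s - x) \<le> 2*h" if "s \<in> {0..h}" for s
    proof -
      have "norm (p1 s - x) \<le> norm (s *\<^sub>R ea) + norm (h *\<^sub>R eb)" unfolding p1_def
        using norm_triangle_ineq[of "s *\<^sub>R ea" "h *\<^sub>R eb"] by (simp del: norm_scaleR)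
      then show ?thesis using that h unfolding ea_def eb_def by auto
    qed
    have np0: "norm (p0 s - x) \<le> h" if "s \<in> {0..h}" for s
      using that h unfolding p0_def ea_def by auto
    have inU1: "p1 s \<in> U" if "s \<in> {0..h}" for s
      using np1[OF that] h d2 unfolding d_def by (auto simp: dist_norm norm_minus_commute)
    have inU0: "p0 s \<in> U" if "s \<in> {0..h}" for s
      using np0[OF that] h d2 unfolding d_def by (auto simp: dist_norm norm_minus_commute)
    have dpath: "((\<lambda>s. F (q + s *\<^sub>R ea)) has_derivative (\<lambda>t. t *\<^sub>R Fa (q + s *\<^sub>R ea))) (at s within {0..h})"
      if "q + s *\<^sub>R ea \<in> U" for q s
    proof -
      have fF: "(F has_derivative frechet_derivative F (at (q + s *\<^sub>R ea))) (at (q + s *\<^sub>R ea))"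
        using dF that pder1_diff by blast
      have lin: "linear (frechet_derivative F (at (q + s *\<^sub>R ea)))"
        using fF has_derivative_linear by blast
      have p: "((\<lambda>s. q + s *\<^sub>R ea) has_derivative (\<lambda>t. t *\<^sub>R ea)) (at s within {0..h})"
        by (auto intro!: derivative_eq_intros)
      have "((\<lambda>s. F (q + s *\<^sub>R ea)) has_derivative (\<lambda>t. frechet_derivative F (at (q + s *\<^sub>R ea)) (t *\<^sub>R ea))) (at s within {0..h})"
        using has_derivative_in_compose[OF p, of F, OF has_derivative_at_withinI[OF fF]] by (simp add: o_def)
      moreover have "frechet_derivative F (at (q + s *\<^sub>R ea)) (t *\<^sub>R ea) = t *\<^sub>R Fa (q + s *\<^sub>R ea)" for t
        using linear_scale[OF lin] unfolding Fa_def ea_def by simp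
      ultimately show ?thesis by simp
    qed
    have dg: "(g has_derivative (\<lambda>t. t *\<^sub>R (Fa (p1 s) - Fa (p0 s) - C))) (at s within {0..h})"
      if s: "s \<in> {0..h}" for s
    proof -
      have 1: "((\<lambda>s. F (p1 s)) has_derivative (\<lambda>t. t *\<^sub>R Fa (p1 s))) (at s within {0..h})"
        using dpath[of "x + h *\<^sub>R eb" s] inU1[OF s] unfolding p1_def by (simp add: algebra_simps)
      have 0: "((\<lambda>s. F (p0 s)) has_derivative (\<lambda>t. t *\<^sub>R Fa (p0 s))) (at s within {0..h})"
        using dpath[of x s] inU0[OF s] unfolding p0_def by simp
      have "(g has_derivative (\<lambda>t. t *\<^sub>R Fa (p1 s) - t *\<^sub>R Fa (p0 s) - t *\<^sub>R C)) (at s within {0..h})"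
        unfolding g_def by (intro has_derivative_diff 1 0) (auto intro!: derivative_eq_intros)
      then show ?thesis by (simp add: algebra_simps)
    qed
    have bnd: "onorm (\<lambda>t. t *\<^sub>R (Fa (p1 s) - Fa (p0 s) - C)) \<le> 3*e*h" if s: "s \<in> {0..h}" for s
    proof -
      have "onorm (\<lambda>t. t *\<^sub>R (Fa (p1 s) - Fa (p0 s) - C)) = norm (Fa (p1 s) - Fa (p0 s) - C)"
        using onorm_scaleR_left[OF bounded_linear_ident, of "Fa (p1 s) - Fa (p0 s) - C"] onorm_id[where 'a=real] by simp
      also have "norm (Fa (p1 s) - Fa (p0 s) - C) = norm ((Fa (p1 s) - Fa x - DA (p1 s - x)) - (Fa (p0 s) - Fa x - DA (p0 s - x)))"
      proof -
        have "DA (p1 s - x) - DA (p0 s - x) = DA (p1 s - p0 s)" using linear_diff[OF linDA] by simp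
        also have "p1 s - p0 s = h *\<^sub>R eb" unfolding p1_def p0_def by simp
        finally have "Fa (p1 s) - Fa (p0 s) - C = (Fa (p1 s) - Fa x - DA (p1 s - x)) - (Fa (p0 s) - Fa x - DA (p0 s - x))"
          unfolding C_def using linear_scale[OF linDA] by (simp add: algebra_simps)
        then show ?thesis by (rule arg_cong)
      qed
      also have "\<dots> \<le> norm (Fa (p1 s) - Fa x - DA (p1 s - x)) + norm (Fa (p0 s) - Fa x - DA (p0 s - x))"
        by (rule norm_triangle_ineq4)
      also have "\<dots> \<le> e * norm (p1 s - x) + e * norm (p0 s - x)"
      proof (intro add_mono)
        show "norm (Fa (p1 s) - Fa x - DA (p1 s - x)) \<le> e * norm (p1 s - x)"
          using d1(2) np1[OF s] h unfolding d_def by auto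
        show "norm (Fa (p0 s) - Fa x - DA (p0 s - x)) \<le> e * norm (p0 s - x)"
          using d1(2) np0[OF s] h unfolding d_def by auto
      qed
      also have "\<dots> \<le> e * (2*h) + e * h"
        using np1[OF s] np0[OF s] e by (intro add_mono mult_left_mono) auto
      finally show ?thesis by simp
    qed
    have "norm (g h - g 0) \<le> 3*e*h * norm (h - 0)"
      by (rule differentiable_bound[of "{0..h}" g _ "3*e*h"]) (use dg bnd h in auto)
    moreover have "g h - g 0 = F (x + h *\<^sub>R axis a 1 + h *\<^sub>R axis b 1) - F (x + h *\<^sub>R axis a 1) - F (x + h *\<^sub>R axis b 1) + F x
           - (h*h) *\<^sub>R pder [b,a] F x"
      unfolding g_def p1_def p0_def C_def ea_def eb_def DA_def Fa_def by (simp add: algebra_simps)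
    ultimately show ?thesis using h by (simp add: mult.assoc)
  qed
  ultimately show ?thesis by blast
qed

lemma clairaut_gen:
  fixes F :: "real^'m::finite \<Rightarrow> 'b::real_normed_vector"
  assumes U: "open U" "x \<in> U" and dF: "\<forall>y\<in>U. F differentiable at y"
    and dA: "pder [a] F differentiable at x" and dB: "pder [b] F differentiable at x"
  shows "pder [a,b] F x = pder [b,a] F x"
proof -
  have "norm (pder [a,b] F x - pder [b,a] F x) \<le> 6*e" if e: "e > 0" for e
  proof -
    obtain d where d: "d > 0" "\<forall>h. 0 < h \<longrightarrow> h < d \<longrightarrow>
     norm (F (x + h *\<^sub>R axis a 1 + h *\<^sub>R axis b 1) - F (x + h *\<^sub>R axis a 1) - F (x + h *\<^sub>R axis b 1) + F x
           - (h*h) *\<^sub>R pder [b,a] F x) \<le> 3*e*(h*h)"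
      using clairaut_half[OF U dF dA e] by blast
    obtain d' where d': "d' > 0" "\<forall>h. 0 < h \<longrightarrow> h < d' \<longrightarrow>
     norm (F (x + h *\<^sub>R axis b 1 + h *\<^sub>R axis a 1) - F (x + h *\<^sub>R axis b 1) - F (x + h *\<^sub>R axis a 1) + F x
           - (h*h) *\<^sub>R pder [a,b] F x) \<le> 3*e*(h*h)"
      using clairaut_half[OF U dF dB e] by blast
    define h where "h = min d d' / 2"
    have h: "0 < h" "h < d" "h < d'" using d d' unfolding h_def by auto
    define D where "D = F (x + h *\<^sub>R axis a 1 + h *\<^sub>R axis b 1) - F (x + h *\<^sub>R axis a 1) - F (x + h *\<^sub>R axis b 1) + F x"
    have D': "F (x + h *\<^sub>R axis b 1 + h *\<^sub>R axis a 1) - F (x + h *\<^sub>R axis b 1) - F (x + h *\<^sub>R axis a 1) + F x = D"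
      unfolding D_def by (simp add: algebra_simps)
    have 1: "norm (D - (h*h) *\<^sub>R pder [b,a] F x) \<le> 3*e*(h*h)" using d(2) h unfolding D_def by blast
    have 2: "norm (D - (h*h) *\<^sub>R pder [a,b] F x) \<le> 3*e*(h*h)" using d'(2) h D' by metis
    have "(h*h) *\<^sub>R (pder [a,b] F x - pder [b,a] F x) = (D - (h*h) *\<^sub>R pder [b,a] F x) - (D - (h*h) *\<^sub>R pder [a,b] F x)"
      by (simp add: algebra_simps)
    then have "norm ((h*h) *\<^sub>R (pder [a,b] F x - pder [b,a] F x)) \<le> 3*e*(h*h) + 3*e*(h*h)"
      using norm_triangle_ineq4[of "D - (h*h) *\<^sub>R pder [b,a] F x" "D - (h*h) *\<^sub>R pder [a,b] F x"] 1 2 by simp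
    moreover have "norm ((h*h) *\<^sub>R (pder [a,b] F x - pder [b,a] F x)) = (h*h) * norm (pder [a,b] F x - pder [b,a] F x)"
      by (simp only: norm_scaleR abs_mult_self_eq abs_mult abs_mult_self)
    ultimately have "(h*h) * norm (pder [a,b] F x - pder [b,a] F x) \<le> (h*h) * (6*e)" by (simp add: algebra_simps)
    then show ?thesis using h(1) by (simp add: mult_le_cancel_left_pos)
  qed
  note P = this
  have "\<not> norm (pder [a,b] F x - pder [b,a] F x) > 0"
  proof
    assume "norm (pder [a,b] F x - pder [b,a] F x) > 0"
    then have p: "norm (pder [a,b] F x - pder [b,a] F x) / 12 > 0" by simp
    from P[OF p] p show False by simp
  qed
  then show ?thesis by simp
qed

lemma smooth_diff: "smooth_on U F \<Longrightarrow> x \<in> U \<Longrightarrow> F differentiable at x"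
  unfolding smooth_on_def by (metis pder.simps(1))

lemma smooth_pder: "smooth_on U F \<Longrightarrow> smooth_on U (pder [k] F)"
  unfolding smooth_on_smN using smN_Suc by blast

lemma clairaut:
  assumes "open U" "x \<in> U" "smooth_on U F"
  shows "pder [a,b] F x = pder [b,a] F x"
  using clairaut_gen[OF assms(1,2)] smooth_diff[OF assms(3)] smooth_diff[OF smooth_pder[OF assms(3)] assms(2)]
  by blast

lemma smooth_linear: "open U \<Longrightarrow> bounded_linear L \<Longrightarrow> smooth_on U F \<Longrightarrow> smooth_on U (\<lambda>y. L (F y))"
  unfolding smooth_on_smN using smN_linear by blast

lemma smooth_add: "open U \<Longrightarrow> smooth_on U F \<Longrightarrow> smooth_on U H \<Longrightarrow> smooth_on U (\<lambda>y. F y + H y)"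
  unfolding smooth_on_smN using smN_add by blast

lemma smooth_bilinear: "open U \<Longrightarrow> bounded_bilinear P \<Longrightarrow> smooth_on U F \<Longrightarrow> smooth_on U H \<Longrightarrow> smooth_on U (\<lambda>y. P (F y) (H y))"
  unfolding smooth_on_smN using smN_bilinear by blast

lemma smooth_const: "smooth_on U (\<lambda>y. c)"
  unfolding smooth_on_smN using smN_const by blast

lemma smooth_sum: "open U \<Longrightarrow> finite S \<Longrightarrow> (\<And>i. i \<in> S \<Longrightarrow> smooth_on U (F i)) \<Longrightarrow> smooth_on U (\<lambda>y. \<Sum>i\<in>S. F i y)"
  unfolding smooth_on_smN using smN_sum by blast

lemma smooth_inverse: "open U \<Longrightarrow> \<forall>y\<in>U. h y \<noteq> 0 \<Longrightarrow> smooth_on U h \<Longrightarrow> smooth_on U (\<lambda>y. inverse (h y :: real))"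
  unfolding smooth_on_smN using smN_inverse by blast

lemma smooth_minus: "open U \<Longrightarrow> smooth_on U F \<Longrightarrow> smooth_on U (\<lambda>y. - F y)"
  using smooth_linear[of U "\<lambda>x. - x"] bounded_linear_minus[OF bounded_linear_ident] by blast

lemma smooth_diff2: "open U \<Longrightarrow> smooth_on U F \<Longrightarrow> smooth_on U H \<Longrightarrow> smooth_on U (\<lambda>y. F y - H y)"
  using smooth_add[of U F "\<lambda>y. - H y"] smooth_minus[of U H] by simp

lemma smooth_mult: "open U \<Longrightarrow> smooth_on U F \<Longrightarrow> smooth_on U H \<Longrightarrow> smooth_on U (\<lambda>y. F y * H y :: real)"
  using smooth_bilinear[OF _ bounded_bilinear_mult] by blast

lemma smooth_scaleR: "open U \<Longrightarrow> smooth_on U F \<Longrightarrow> smooth_on U H \<Longrightarrow> smooth_on U (\<lambda>y. F y *\<^sub>R H y)"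
  using smooth_bilinear[OF _ bounded_bilinear_scaleR] by blast

lemma smooth_inner: "open U \<Longrightarrow> smooth_on U F \<Longrightarrow> smooth_on U H \<Longrightarrow> smooth_on U (\<lambda>y. F y \<bullet> H y)"
  using smooth_bilinear[OF _ bounded_bilinear_inner] by blast

lemma smooth_nth: "open U \<Longrightarrow> smooth_on U F \<Longrightarrow> smooth_on U (\<lambda>y. F y $ i)"
  using smooth_linear[OF _ bounded_linear_vec_nth] by blast

lemma smooth_vec:
  fixes F :: "real^'m::finite \<Rightarrow> real^'n::finite"
  shows "open U \<Longrightarrow> (\<And>i. smooth_on U (\<lambda>y. F y $ i)) \<Longrightarrow> smooth_on U F"
proof -
  assume U: "open U" and c: "\<And>i. smooth_on U (\<lambda>y. F y $ i)"
  have "smooth_on U (\<lambda>y. \<Sum>i\<in>UNIV. (F y $ i) *\<^sub>R axis i 1)"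
    by (intro smooth_sum[OF U finite_class.finite_UNIV] smooth_scaleR[OF U c smooth_const])
  moreover have "(\<Sum>i\<in>UNIV. (F y $ i) *\<^sub>R axis i (1::real)) = F y" for y
    using basis_expansion[of "F y"] by (simp add: scalar_mult_eq_scaleR)
  ultimately show ?thesis by (metis (no_types, lifting) ext)
qed


section \<open>Matrix algebra\<close>

lemma mm_add_r: "((A::real^'n^'m) + B) ** (C::real^'p^'n) = A ** C + B ** C"
  by (simp add: matrix_matrix_mult_def vec_eq_iff sum.distrib algebra_simps)
lemma mm_add_l: "(A::real^'n^'m) ** ((B::real^'p^'n) + C) = A ** B + A ** C"
  by (simp add: matrix_add_ldistrib)
lemma mm_diff_r: "((A::real^'n^'m) - B) ** (C::real^'p^'n) = A ** C - B ** C"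
  by (simp add: matrix_matrix_mult_def vec_eq_iff sum_subtractf algebra_simps)
lemma mm_diff_l: "(A::real^'n^'m) ** ((B::real^'p^'n) - C) = A ** B - A ** C"
  by (simp add: matrix_matrix_mult_def vec_eq_iff sum_subtractf algebra_simps)
lemma mm_neg_r: "(- (A::real^'n^'m)) ** (C::real^'p^'n) = - (A ** C)"
  by (simp add: matrix_matrix_mult_def vec_eq_iff sum_negf)
lemma mm_neg_l: "(A::real^'n^'m) ** (- (C::real^'p^'n)) = - (A ** C)"
  by (simp add: matrix_matrix_mult_def vec_eq_iff sum_negf)
lemma mm_scale_r: "(c *\<^sub>R (A::real^'n^'m)) ** (C::real^'p^'n) = c *\<^sub>R (A ** C)"
  by (simp add: matrix_matrix_mult_def vec_eq_iff sum_distrib_left algebra_simps)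
lemma mm_scale_l: "(A::real^'n^'m) ** (c *\<^sub>R (C::real^'p^'n)) = c *\<^sub>R (A ** C)"
  by (simp add: matrix_matrix_mult_def vec_eq_iff sum_distrib_left algebra_simps)
lemma mm_zero_r: "(A::real^'n^'m) ** (0::real^'p^'n) = 0"
  by (simp add: matrix_matrix_mult_def vec_eq_iff)
lemma mm_zero_l: "(0::real^'n^'m) ** (A::real^'p^'n) = 0"
  by (simp add: matrix_matrix_mult_def vec_eq_iff)
lemma mm_assoc: "((A::real^'n^'m) ** (B::real^'p^'n)) ** (C::real^'q^'p) = A ** (B ** C)"
  by (simp add: matrix_mul_assoc)
lemma mm_sum_r: "(\<Sum>i\<in>S. (A i::real^'n^'m)) ** (C::real^'p^'n) = (\<Sum>i\<in>S. A i ** C)"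
  by (induction S rule: infinite_finite_induct) (auto simp: mm_add_r mm_zero_l)
lemma mm_sum_l: "(C::real^'n^'m) ** (\<Sum>i\<in>S. (A i::real^'p^'n)) = (\<Sum>i\<in>S. C ** A i)"
  by (induction S rule: infinite_finite_induct) (auto simp: mm_add_l mm_zero_r)

lemmas mm_simps = mm_add_r mm_add_l mm_diff_r mm_diff_l mm_neg_r mm_neg_l mm_scale_r mm_scale_l
  mm_zero_r mm_zero_l mm_assoc mm_sum_r mm_sum_l

lemma jacobi_test:
  fixes A B C :: "real^'n^'n"
  shows "A ** (B ** C - C ** B) - (B ** C - C ** B) ** A + B ** (C ** A - A ** C) - (C ** A - A ** C) ** B
       + C ** (A ** B - B ** A) - (A ** B - B ** A) ** C = 0"
  by (simp add: mm_simps algebra_simps)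

lemma bb_mm: "bounded_bilinear ((**) :: real^'n::finite^'m::finite \<Rightarrow> real^'p::finite^'n \<Rightarrow> real^'p^'m)"
  unfolding bilinear_conv_bounded_bilinear[symmetric] bilinear_def
  by (auto simp: linear_iff mm_add_r mm_add_l mm_scale_r mm_scale_l)

lemma mv_scale_l: "(c *\<^sub>R (A::real^'n::finite^'m)) *v x = c *\<^sub>R (A *v x)"
  by (simp add: matrix_vector_mult_def vec_eq_iff sum_distrib_left algebra_simps)

lemma bb_mv: "bounded_bilinear ((*v) :: real^'n::finite^'m::finite \<Rightarrow> real^'n \<Rightarrow> real^'m)"
  unfolding bilinear_conv_bounded_bilinear[symmetric] bilinear_def
  by (auto simp: linear_iff algebra_simps matrix_vector_mult_add_rdistrib mv_scale_l)

lemma bl_transpose: "bounded_linear (transpose :: real^'n::finite^'m::finite \<Rightarrow> real^'m^'n)"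
proof -
  have "linear (transpose :: real^'n::finite^'m::finite \<Rightarrow> real^'m^'n)"
    by (auto simp: linear_iff transpose_def vec_eq_iff)
  then show ?thesis by (simp add: linear_conv_bounded_linear)
qed

lemma smooth_mm:
  fixes A :: "real^'k::finite \<Rightarrow> real^'n::finite^'m::finite" and B :: "real^'k \<Rightarrow> real^'p::finite^'n"
  shows "open U \<Longrightarrow> smooth_on U A \<Longrightarrow> smooth_on U B \<Longrightarrow> smooth_on U (\<lambda>y. A y ** B y)"
  by (rule smooth_bilinear[OF _ bb_mm])
lemma smooth_mv:
  fixes A :: "real^'k::finite \<Rightarrow> real^'n::finite^'m::finite" and v :: "real^'k \<Rightarrow> real^'n"
  shows "open U \<Longrightarrow> smooth_on U A \<Longrightarrow> smooth_on U v \<Longrightarrow> smooth_on U (\<lambda>y. A y *v v y)"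
  by (rule smooth_bilinear[OF _ bb_mv])
lemma smooth_transpose:
  fixes A :: "real^'k::finite \<Rightarrow> real^'n::finite^'m::finite"
  shows "open U \<Longrightarrow> smooth_on U A \<Longrightarrow> smooth_on U (\<lambda>y. transpose (A y))"
  by (rule smooth_linear[OF _ bl_transpose])

lemma pder_mm:
  fixes A :: "real^'k::finite \<Rightarrow> real^'n::finite^'m::finite" and B :: "real^'k \<Rightarrow> real^'p::finite^'n"
  shows "A differentiable at x \<Longrightarrow> B differentiable at x \<Longrightarrow>
  pder [k] (\<lambda>y. A y ** B y) x = pder [k] A x ** B x + A x ** pder [k] B x"
  by (rule pder_bilinear[OF bb_mm])
lemma pder_mv:
  fixes A :: "real^'k::finite \<Rightarrow> real^'n::finite^'m::finite" and v :: "real^'k \<Rightarrow> real^'n"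
  shows "A differentiable at x \<Longrightarrow> v differentiable at x \<Longrightarrow>
  pder [k] (\<lambda>y. A y *v v y) x = pder [k] A x *v v x + A x *v pder [k] v x"
  by (rule pder_bilinear[OF bb_mv])
lemma pder_transpose:
  fixes A :: "real^'k::finite \<Rightarrow> real^'n::finite^'m::finite"
  shows "A differentiable at x \<Longrightarrow> pder [k] (\<lambda>y. transpose (A y)) x = transpose (pder [k] A x)"
  by (rule pder_linear[OF bl_transpose])
lemma pder_nth: "v differentiable at x \<Longrightarrow> pder [k] (\<lambda>y. v y $ i) x = pder [k] v x $ i"
  by (rule pder_linear[OF bounded_linear_vec_nth])
lemma pder_scaleR: "(c::_\<Rightarrow>real) differentiable at x \<Longrightarrow> v differentiable at x \<Longrightarrow>
  pder [k] (\<lambda>y. c y *\<^sub>R v y) x = pder [k] c x *\<^sub>R v x + c x *\<^sub>R pder [k] v x"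
  by (rule pder_bilinear[OF bounded_bilinear_scaleR])
lemma pder_mult: "(c::_\<Rightarrow>real) differentiable at x \<Longrightarrow> d differentiable at x \<Longrightarrow>
  pder [k] (\<lambda>y. c y * d y) x = pder [k] c x * d x + c x * pder [k] d x"
  by (rule pder_bilinear[OF bounded_bilinear_mult])
lemma pder_inner: "v differentiable at x \<Longrightarrow> w differentiable at x \<Longrightarrow>
  pder [k] (\<lambda>y. v y \<bullet> w y) x = pder [k] v x \<bullet> w x + v x \<bullet> pder [k] w x"
  by (rule pder_bilinear[OF bounded_bilinear_inner])
lemma pder_diff: "F differentiable at x \<Longrightarrow> H differentiable at x \<Longrightarrow> pder [k] (\<lambda>y. F y - H y) x = pder [k] F x - pder [k] H x"
proof -
  assume a: "F differentiable at x" "H differentiable at x"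
  have "((\<lambda>y. F y - H y) has_derivative (\<lambda>v. frechet_derivative F (at x) v - frechet_derivative H (at x) v)) (at x)"
    using has_derivative_diff[OF pder1_diff[OF a(1)] pder1_diff[OF a(2)]] .
  from pder1_has[OF this, of k] show ?thesis by simp
qed
lemma pder_minus: "F differentiable at x \<Longrightarrow> pder [k] (\<lambda>y. - F y) x = - pder [k] F x"
  by (rule pder_linear[OF bounded_linear_minus[OF bounded_linear_ident]])
lemma pder_sum: "finite S \<Longrightarrow> (\<And>i. i \<in> S \<Longrightarrow> F i differentiable at x) \<Longrightarrow>
   pder [k] (\<lambda>y. \<Sum>i\<in>S. F i y) x = (\<Sum>i\<in>S. pder [k] (F i) x)"
proof (induction S rule: finite_induct)
  case empty then show ?case by simp
next
  case (insert a S)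
  have d: "(\<lambda>y. \<Sum>i\<in>S. F i y) differentiable at x"
    using insert.prems by (intro differentiable_sum) (auto simp: insert.hyps)
  have "pder [k] (\<lambda>y. \<Sum>i\<in>insert a S. F i y) x = pder [k] (\<lambda>y. F a y + (\<Sum>i\<in>S. F i y)) x"
    using insert.hyps by simp
  also have "\<dots> = pder [k] (F a) x + pder [k] (\<lambda>y. \<Sum>i\<in>S. F i y) x"
    using pder_add[OF _ d] insert.prems by blast
  finally show ?case using insert by simp
qed
lemma pder_cscale: "F differentiable at x \<Longrightarrow> pder [k] (\<lambda>y. c *\<^sub>R F y) x = c *\<^sub>R pder [k] F x"
  by (rule pder_linear[OF bounded_linear_scaleR_right])

lemma pder_zero_on:
  assumes "open U" "x \<in> U" "\<forall>y\<in>U. F y = 0"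
  shows "pder [k] F x = 0"
  using pder_local[OF assms(1), of F "\<lambda>y. 0" "[k]"] assms by simp

lemma pder_eq_on:
  assumes "open U" "x \<in> U" "\<forall>y\<in>U. F y = H y"
  shows "pder ks F x = pder ks H x"
  using pder_local[OF assms(1,3)] assms(2) by blast

section \<open>Matrix inverse\<close>

lemma minv: "invertible (A::real^'n::finite^'n) \<Longrightarrow> A ** matrix_inv A = mat 1 \<and> matrix_inv A ** A = mat 1"
  unfolding invertible_def matrix_inv_def by (rule someI_ex)

lemma minv_entry:
  fixes A :: "real^'n::finite^'n"
  assumes "invertible A"
  shows "det (\<chi> i l. if l = k then axis j 1 $ i else A$i$l) / det A = matrix_inv A $ k $ j"
proof -
  have d: "det A \<noteq> 0" using assms invertible_det_nz by blast
  have "A *v (matrix_inv A *v axis j 1) = axis j 1"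
    using minv[OF assms] by (simp add: matrix_vector_mul_assoc)
  then have "matrix_inv A *v axis j 1 = (\<chi> k. det(\<chi> i l. if l=k then axis j 1 $i else A$i$l) / det A)"
    using cramer[OF d] by blast
  moreover have "(matrix_inv A *v axis j 1) $ k = matrix_inv A $ k $ j"
    by (simp add: matrix_vector_mult_def axis_def if_distrib cong: if_cong)
  ultimately show ?thesis by simp
qed

lemma smooth_prod:
  assumes U: "open U" and "finite S" and "\<And>i. i \<in> S \<Longrightarrow> smooth_on U (F i)"
  shows "smooth_on U (\<lambda>y. \<Prod>i\<in>S. F i y :: real)"
  using assms(2,3)
proof (induction S rule: finite_induct)
  case empty then show ?case using smooth_const by simp
next
  case (insert a S)
  then have "smooth_on U (\<lambda>y. F a y * (\<Prod>i\<in>S. F i y))" using smooth_mult[OF U] by blast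
  then show ?case using insert by simp
qed

lemma smooth_entries: "open U \<Longrightarrow> smooth_on U A \<Longrightarrow> smooth_on U (\<lambda>y. A y $ i $ j)"
  by (intro smooth_nth)

lemma bl_axis: "bounded_linear (axis i :: 'b::euclidean_space \<Rightarrow> 'b^'n::finite)"
proof -
  have "linear (axis i :: 'b::euclidean_space \<Rightarrow> 'b^'n::finite)"
    by (auto simp: linear_iff axis_def vec_eq_iff)
  then show ?thesis by (simp add: linear_conv_bounded_linear)
qed

lemma axis_expansion: "(\<Sum>i\<in>UNIV. axis i (v $ i)) = (v::'b::real_normed_vector^'n::finite)"
proof -
  have "(\<Sum>i\<in>UNIV. axis i (v $ i)) $ j = v $ j" for j
  proof -
    have "(\<Sum>i\<in>UNIV. axis i (v $ i)) $ j = (\<Sum>i\<in>UNIV. axis i (v $ i) $ j)" by (rule sum_component)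
    also have "\<dots> = (\<Sum>i\<in>UNIV. if i = j then v $ j else 0)" by (rule sum.cong) (auto simp: axis_def)
    finally show ?thesis by simp
  qed
  then show ?thesis by (simp add: vec_eq_iff)
qed

lemma smooth_vec2:
  fixes F :: "real^'m::finite \<Rightarrow> 'b::euclidean_space^'n::finite"
  assumes U: "open U" and c: "\<And>i. smooth_on U (\<lambda>y. F y $ i)"
  shows "smooth_on U F"
proof -
  have "smooth_on U (\<lambda>y. \<Sum>i\<in>UNIV. axis i (F y $ i))"
    by (intro smooth_sum[OF U finite_class.finite_UNIV] smooth_linear[OF U bl_axis c])
  then show ?thesis by (simp add: axis_expansion)
qed

lemma smooth_mat:
  assumes U: "open U" and e: "\<And>i j. smooth_on U (\<lambda>y. (A y :: real^'n::finite^'m::finite) $ i $ j)"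
  shows "smooth_on U A"
proof (rule smooth_vec2[OF U])
  fix i show "smooth_on U (\<lambda>y. A y $ i)" by (rule smooth_vec[OF U]) (rule e)
qed

lemma smooth_det:
  assumes "open U" "\<And>i j. smooth_on U (\<lambda>y. (A y :: real^'n::finite^'n) $ i $ j)"
  shows "smooth_on U (\<lambda>y. det (A y))"
  unfolding det_def
  by (intro smooth_sum[OF assms(1)] smooth_mult[OF assms(1)] smooth_const smooth_prod[OF assms(1)] assms(2)) auto

lemma smooth_minv:
  fixes A :: "real^'m::finite \<Rightarrow> real^'n::finite^'n"
  assumes U: "open U" and A: "smooth_on U A" and inv: "\<forall>y\<in>U. invertible (A y)"
  shows "smooth_on U (\<lambda>y. matrix_inv (A y))"
proof (rule smooth_mat[OF U])
  fix k j
  have e: "\<And>i l. smooth_on U (\<lambda>y. (A y) $ i $ l)" using smooth_entries[OF U A] .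
  have 1: "smooth_on U (\<lambda>y. det (\<chi> i l. if l = k then axis j 1 $ i else A y $i$l))"
  proof (rule smooth_det[OF U])
    fix i l
    show "smooth_on U (\<lambda>y. (\<chi> i l. if l = k then axis j 1 $ i else A y $i$l) $ i $ l)"
      by (cases "l = k") (auto simp: e smooth_const)
  qed
  have 2: "smooth_on U (\<lambda>y. inverse (det (A y)))"
    by (rule smooth_inverse[OF U]) (use inv invertible_det_nz smooth_det[OF U e] in auto)
  have "smooth_on U (\<lambda>y. det (\<chi> i l. if l = k then axis j 1 $ i else A y $i$l) * inverse (det (A y)))"
    using smooth_mult[OF U 1 2] .
  then show "smooth_on U (\<lambda>y. matrix_inv (A y) $ k $ j)"
    by (rule smooth_on_cong[OF U, rotated]) (use inv minv_entry in \<open>auto simp: divide_inverse\<close>)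
qed


declare pder.simps(2)[simp del]

lemma transpose_nth: "transpose A $ i $ j = A $ j $ i"
  by (simp add: transpose_def)

lemma pder_pder: "pder [a] (pder [b] F) = pder [a,b] F"
  using pder_append[of "[a]" b F] by simp

lemma pder_Cons_eq: "pder [k] F x = frechet_derivative F (at x) (axis k 1)"
  by (simp add: pder.simps)

lemma dirD_exp:
  assumes "Y differentiable at x"
  shows "dirD Y X x = (\<Sum>a\<in>UNIV. X x $ a *\<^sub>R pder [a] Y x)"
proof -
  have lin: "linear (frechet_derivative Y (at x))" using assms linear_frechet_derivative by blast
  have "X x = (\<Sum>a\<in>UNIV. X x $ a *\<^sub>R axis a 1)"
    using basis_expansion[of "X x"] by (simp add: scalar_mult_eq_scaleR)
  then have "dirD Y X x = frechet_derivative Y (at x) (\<Sum>a\<in>UNIV. X x $ a *\<^sub>R axis a 1)"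
    unfolding dirD_def by simp
  also have "\<dots> = (\<Sum>a\<in>UNIV. frechet_derivative Y (at x) (X x $ a *\<^sub>R axis a 1))"
    by (rule linear_sum[OF lin])
  also have "\<dots> = (\<Sum>a\<in>UNIV. X x $ a *\<^sub>R frechet_derivative Y (at x) (axis a 1))"
    by (rule sum.cong) (auto simp: linear_scale[OF lin])
  finally show ?thesis by (simp add: pder_Cons_eq)
qed

locale rgeo =
  fixes U :: "(real^'m::finite) set" and g :: "real^'m \<Rightarrow> real^'m^'m"
  assumes U: "open U" and rm: "riemannian_metric_on U g"
begin

definition Gi :: "real^'m \<Rightarrow> real^'m^'m" where "Gi y = matrix_inv (g y)"
definition low :: "'m \<Rightarrow> 'm \<Rightarrow> 'm \<Rightarrow> real^'m \<Rightarrow> real" where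
  "low a j l y = (1/2) * (pder [a] g y $ j $ l + pder [j] g y $ a $ l - pder [l] g y $ a $ j)"
definition Gam :: "'m \<Rightarrow> real^'m \<Rightarrow> real^'m^'m" where "Gam a y = (\<chi> k j. christoffel g y k a j)"
definition cd :: "'m \<Rightarrow> (real^'m \<Rightarrow> real^'m) \<Rightarrow> real^'m \<Rightarrow> real^'m" where
  "cd a Y y = pder [a] Y y + Gam a y *v Y y"
definition Rm :: "'m \<Rightarrow> 'm \<Rightarrow> real^'m \<Rightarrow> real^'m^'m" where
  "Rm a b y = pder [a] (Gam b) y - pder [b] (Gam a) y + Gam a y ** Gam b y - Gam b y ** Gam a y"

lemma g_smooth: "smooth_on U g" using rm unfolding riemannian_metric_on_def by blast

lemma g_diff: "y \<in> U \<Longrightarrow> g differentiable at y" using smooth_diff g_smooth by blast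

lemma g_sym: "y \<in> U \<Longrightarrow> g y $ i $ j = g y $ j $ i"
proof -
  assume y: "y \<in> U"
  have "transpose (g y) = g y" using rm y unfolding riemannian_metric_on_def by blast
  then have "transpose (g y) $ i $ j = g y $ i $ j" by simp
  then show ?thesis by (simp add: transpose_nth)
qed

lemma g_sym_mat: "y \<in> U \<Longrightarrow> transpose (g y) = g y"
  using rm unfolding riemannian_metric_on_def by blast

lemma g_pos: "y \<in> U \<Longrightarrow> v \<noteq> 0 \<Longrightarrow> v \<bullet> (g y *v v) > 0"
  using rm unfolding riemannian_metric_on_def gmet_def by blast

lemma g_inv: "y \<in> U \<Longrightarrow> invertible (g y)"
proof -
  assume y: "y \<in> U"
  have "\<forall>v. g y *v v = 0 \<longrightarrow> v = 0"
    using g_pos[OF y] by (metis inner_zero_right less_irrefl)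
  then show ?thesis using matrix_left_invertible_ker invertible_left_inverse by blast
qed

lemma g_Gi: "y \<in> U \<Longrightarrow> g y ** Gi y = mat 1" using minv[OF g_inv] unfolding Gi_def by blast
lemma Gi_g: "y \<in> U \<Longrightarrow> Gi y ** g y = mat 1" using minv[OF g_inv] unfolding Gi_def by blast

lemma Gi_smooth: "smooth_on U Gi"
  unfolding Gi_def by (rule smooth_minv[OF U g_smooth]) (use g_inv in blast)

lemma Gi_sym: "y \<in> U \<Longrightarrow> transpose (Gi y) = Gi y"
proof -
  assume y: "y \<in> U"
  have "transpose (Gi y) ** g y = mat 1"
    using arg_cong[OF g_Gi[OF y], of transpose] by (simp add: matrix_transpose_mul g_sym_mat[OF y])
  then have "transpose (Gi y) = transpose (Gi y) ** (g y ** Gi y)" using g_Gi[OF y] by simp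
  also have "\<dots> = Gi y" using \<open>transpose (Gi y) ** g y = mat 1\<close> by (simp add: matrix_mul_assoc)
  finally show ?thesis .
qed

lemma Gi_sym': "y \<in> U \<Longrightarrow> Gi y $ i $ j = Gi y $ j $ i"
proof -
  assume y: "y \<in> U"
  have "transpose (Gi y) $ i $ j = Gi y $ i $ j" using Gi_sym[OF y] by simp
  then show ?thesis by (simp add: transpose_nth)
qed

lemma dg_sym: "y \<in> U \<Longrightarrow> pder [k] g y $ i $ j = pder [k] g y $ j $ i"
proof -
  assume y: "y \<in> U"
  have "pder [k] (\<lambda>y. g y $ i $ j) y = pder [k] (\<lambda>y. g y $ j $ i) y"
    by (rule pder_eq_on[OF U y]) (use g_sym in blast)
  moreover have "pder [k] (\<lambda>y. g y $ i $ j) y = pder [k] g y $ i $ j" for i j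
  proof -
    have "pder [k] (\<lambda>y. g y $ i $ j) y = pder [k] (\<lambda>y. g y $ i) y $ j"
      by (rule pder_nth) (intro diff_lin[OF bounded_linear_vec_nth] g_diff y)
    also have "\<dots> = pder [k] g y $ i $ j" using pder_nth[OF g_diff[OF y]] by simp
    finally show ?thesis .
  qed
  ultimately show ?thesis by simp
qed

lemma pder_entry: "F differentiable at y \<Longrightarrow> pder [k] (\<lambda>y. F y $ i $ j) y = pder [k] F y $ i $ j"
proof -
  assume d: "F differentiable at y"
  have "pder [k] (\<lambda>y. F y $ i $ j) y = pder [k] (\<lambda>y. F y $ i) y $ j"
    by (rule pder_nth) (intro diff_lin[OF bounded_linear_vec_nth] d)
  also have "\<dots> = pder [k] F y $ i $ j" using pder_nth[OF d] by simp
  finally show ?thesis .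
qed

lemma Gam_entry: "y \<in> U \<Longrightarrow> Gam a y $ k $ j = (\<Sum>l\<in>UNIV. Gi y $ k $ l * low a j l y)"
  unfolding Gam_def christoffel_def low_def Gi_def
  by (simp add: pder_entry[OF g_diff] sum_distrib_left algebra_simps)

lemma Gam_sym: "y \<in> U \<Longrightarrow> Gam a y $ k $ b = Gam b y $ k $ a"
  unfolding Gam_entry low_def by (simp add: dg_sym algebra_simps)

lemma Gam_sym_v: "y \<in> U \<Longrightarrow> Gam a y *v axis b 1 = Gam b y *v axis a 1"
  by (simp add: matrix_vector_mult_basis column_def vec_eq_iff Gam_sym)

lemma metric_compat: "y \<in> U \<Longrightarrow> pder [a] g y = g y ** Gam a y + transpose (Gam a y) ** g y"
proof -
  assume y: "y \<in> U"
  have 1: "(g y ** Gam a y) $ i $ j = low a j i y" for i j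
  proof -
    have "(g y ** Gam a y) $ i $ j = (\<Sum>k\<in>UNIV. g y $ i $ k * (\<Sum>l\<in>UNIV. Gi y $ k $ l * low a j l y))"
      by (simp add: matrix_matrix_mult_def Gam_entry[OF y])
    also have "\<dots> = (\<Sum>k\<in>UNIV. \<Sum>l\<in>UNIV. g y $ i $ k * Gi y $ k $ l * low a j l y)"
      by (simp add: sum_distrib_left mult.assoc)
    also have "\<dots> = (\<Sum>l\<in>UNIV. \<Sum>k\<in>UNIV. g y $ i $ k * Gi y $ k $ l * low a j l y)"
      by (rule sum.swap)
    also have "\<dots> = (\<Sum>l\<in>UNIV. (\<Sum>k\<in>UNIV. g y $ i $ k * Gi y $ k $ l) * low a j l y)"
      by (simp add: sum_distrib_right)
    also have "\<dots> = (\<Sum>l\<in>UNIV. (g y ** Gi y) $ i $ l * low a j l y)"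
      by (simp add: matrix_matrix_mult_def)
    also have "\<dots> = (\<Sum>l\<in>UNIV. (mat 1 :: real^'m^'m) $ i $ l * low a j l y)"
      using g_Gi[OF y] by simp
    also have "\<dots> = (\<Sum>l\<in>UNIV. if i = l then low a j l y else 0)"
      by (rule sum.cong) (auto simp: mat_def)
    also have "\<dots> = low a j i y" by simp
    finally show ?thesis .
  qed
  have 2: "(transpose (Gam a y) ** g y) $ i $ j = low a i j y" for i j
  proof -
    have "(transpose (Gam a y) ** g y) $ i $ j = (g y ** Gam a y) $ j $ i"
      by (simp add: matrix_matrix_mult_def transpose_def g_sym[OF y] mult.commute)
    then show ?thesis using 1 by simp
  qed
  show ?thesis
    by (simp add: vec_eq_iff 1 2 low_def dg_sym[OF y] field_simps)
qed


lemma low_smooth: "smooth_on U (low a j l)"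
proof -
  have e: "smooth_on U (\<lambda>y. pder [k] g y $ i $ j)" for k i j
    by (intro smooth_entries[OF U] smooth_pder g_smooth)
  show ?thesis unfolding low_def[abs_def]
    by (intro smooth_mult[OF U] smooth_const smooth_add[OF U] smooth_diff2[OF U] e)
qed

lemma Gam_smooth: "smooth_on U (Gam a)"
proof (rule smooth_mat[OF U])
  fix k j
  have "smooth_on U (\<lambda>y. \<Sum>l\<in>UNIV. Gi y $ k $ l * low a j l y)"
    by (intro smooth_sum[OF U] finite_class.finite_UNIV smooth_mult[OF U] smooth_entries[OF U Gi_smooth] low_smooth)
  then show "smooth_on U (\<lambda>y. Gam a y $ k $ j)"
    by (rule smooth_on_cong[OF U, rotated]) (simp add: Gam_entry)
qed

lemma Gam_diff: "y \<in> U \<Longrightarrow> Gam a differentiable at y" using smooth_diff Gam_smooth by blast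

lemma cd_smooth: "smooth_on U Y \<Longrightarrow> smooth_on U (cd a Y)"
  unfolding cd_def[abs_def] by (intro smooth_add[OF U] smooth_pder smooth_mv[OF U] Gam_smooth)

lemma Rm_smooth: "smooth_on U (Rm a b)"
  unfolding Rm_def[abs_def]
  by (intro smooth_add[OF U] smooth_diff2[OF U] smooth_pder smooth_mm[OF U] Gam_smooth)

lemma nabla_exp:
  assumes "Y differentiable at x"
  shows "nabla g X Y x = (\<Sum>a\<in>UNIV. X x $ a *\<^sub>R cd a Y x)"
proof -
  have "(\<chi> k. \<Sum>i\<in>UNIV. \<Sum>j\<in>UNIV. christoffel g x k i j * X x $ i * Y x $ j) = (\<Sum>a\<in>UNIV. X x $ a *\<^sub>R (Gam a x *v Y x))"
    by (simp add: vec_eq_iff sum_component matrix_vector_mult_def Gam_def sum_distrib_left algebra_simps)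
  then show ?thesis
    unfolding nabla_def dirD_exp[OF assms] cd_def by (simp add: scaleR_add_right sum.distrib)
qed

lemma sum_axis_scale:
  fixes F :: "'m \<Rightarrow> 'b::real_vector"
  shows "(\<Sum>b\<in>UNIV. axis a (1::real) $ b *\<^sub>R F b) = F a"
proof -
  have "(\<Sum>b\<in>UNIV. axis a (1::real) $ b *\<^sub>R F b) = (\<Sum>b\<in>UNIV. if b = a then F b else 0)"
    by (rule sum.cong) (auto simp: axis_def)
  then show ?thesis by simp
qed

lemma nabla_coord: "Y differentiable at x \<Longrightarrow> nabla g (coord a) Y x = cd a Y x"
  by (simp add: nabla_exp coord_def sum_axis_scale)

lemma coord_smooth: "smooth_on U (coord a)"
  unfolding coord_def using smooth_const by blast

lemma lie_coord: "lie (coord a) (coord b) = (\<lambda>x. 0)"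
  unfolding lie_def dirD_def coord_def by simp

lemma nabla_zero: "Z differentiable at x \<Longrightarrow> nabla g (\<lambda>x. 0) Z x = 0"
proof -
  assume dZ: "Z differentiable at x"
  have "frechet_derivative Z (at x) 0 = 0" using linear_0[OF linear_frechet_derivative[OF dZ]] .
  then show ?thesis unfolding nabla_def dirD_def by (simp add: vec_eq_iff)
qed

lemma cd_local: "\<forall>y\<in>U. F y = H y \<Longrightarrow> x \<in> U \<Longrightarrow> cd a F x = cd a H x"
proof -
  assume e: "\<forall>y\<in>U. F y = H y" and x: "x \<in> U"
  have "pder [a] F x = pder [a] H x" by (rule pder_eq_on[OF U x e])
  then show ?thesis unfolding cd_def using e x by simp
qed

lemma cd_cd:
  assumes Z: "smooth_on U Z" and x: "x \<in> U"
  shows "cd a (cd b Z) x = pder [a,b] Z x + pder [a] (Gam b) x *v Z x + Gam b x *v pder [a] Z x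
     + Gam a x *v pder [b] Z x + Gam a x *v (Gam b x *v Z x)"
proof -
  have dZ: "Z differentiable at x" using smooth_diff[OF Z x] .
  have dZb: "pder [b] Z differentiable at x" using smooth_diff[OF smooth_pder[OF Z] x] .
  have dGZ: "(\<lambda>y. Gam b y *v Z y) differentiable at x" using diff_bil[OF bb_mv Gam_diff[OF x] dZ] .
  have "pder [a] (cd b Z) x = pder [a] (pder [b] Z) x + pder [a] (\<lambda>y. Gam b y *v Z y) x"
    unfolding cd_def[abs_def] by (rule pder_add[OF dZb dGZ])
  also have "\<dots> = pder [a,b] Z x + (pder [a] (Gam b) x *v Z x + Gam b x *v pder [a] Z x)"
    by (simp add: pder_pder pder_mv[OF Gam_diff[OF x] dZ])
  finally show ?thesis unfolding cd_def[of a "cd b Z"] by (simp add: cd_def matrix_vector_right_distrib algebra_simps)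
qed

lemma curv_coord:
  assumes Z: "smooth_on U Z" and x: "x \<in> U"
  shows "curv g (coord a) (coord b) Z x = Rm a b x *v Z x"
proof -
  have nb: "\<forall>y\<in>U. nabla g (coord b) Z y = cd b Z y" for b
    using nabla_coord smooth_diff[OF Z] by blast
  have "nabla g (coord a) (nabla g (coord b) Z) x = cd a (nabla g (coord b) Z) x"
    by (rule nabla_coord) (rule diff_local[OF U x nb, THEN iffD2], rule smooth_diff[OF cd_smooth[OF Z] x])
  also have "\<dots> = cd a (cd b Z) x" by (rule cd_local[OF nb x])
  finally have 1: "nabla g (coord a) (nabla g (coord b) Z) x = cd a (cd b Z) x" .
  have "nabla g (coord b) (nabla g (coord a) Z) x = cd b (nabla g (coord a) Z) x"
    by (rule nabla_coord) (rule diff_local[OF U x nb, THEN iffD2], rule smooth_diff[OF cd_smooth[OF Z] x])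
  also have "\<dots> = cd b (cd a Z) x" by (rule cd_local[OF nb x])
  finally have 2: "nabla g (coord b) (nabla g (coord a) Z) x = cd b (cd a Z) x" .
  have 3: "nabla g (lie (coord a) (coord b)) Z x = 0"
    unfolding lie_coord by (rule nabla_zero[OF smooth_diff[OF Z x]])
  have cl: "pder [a,b] Z x = pder [b,a] Z x" by (rule clairaut[OF U x Z])
  show ?thesis
    unfolding curv_def 1 2 3 cd_cd[OF Z x] cl Rm_def
    by (simp add: matrix_vector_mult_add_rdistrib matrix_vector_mult_diff_rdistrib matrix_vector_mul_assoc algebra_simps)
qed

lemma ricci_coord: "x \<in> U \<Longrightarrow> ricci_mat g x $ i $ j = (\<Sum>k\<in>UNIV. Rm k i x $ k $ j)"
proof -
  assume x: "x \<in> U"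
  have "curv g (coord k) (coord i) (coord j) x $ k = Rm k i x $ k $ j" for k
  proof -
    have "curv g (coord k) (coord i) (coord j) x = Rm k i x *v coord j x"
      by (rule curv_coord[OF coord_smooth x])
    then show ?thesis by (simp add: coord_def matrix_vector_mult_basis column_def)
  qed
  then show ?thesis unfolding ricci_mat_def ricci_def by simp
qed

end


lemma pder_const: "pder [k] (\<lambda>y. c) x = 0"
  by (simp add: pder.simps)

lemma tr_add: "transpose ((A::real^'n::finite^'m::finite) + B) = transpose A + transpose B"
  by (simp add: transpose_def vec_eq_iff)
lemma tr_diff: "transpose ((A::real^'n::finite^'m::finite) - B) = transpose A - transpose B"
  by (simp add: transpose_def vec_eq_iff)
lemma tr_mm: "transpose ((A::real^'n::finite^'m::finite) ** (B::real^'p::finite^'n)) = transpose B ** transpose A"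
  by (rule matrix_transpose_mul)

lemma mm_nth_mv: "((M::real^'n::finite^'m::finite) ** (N::real^'p::finite^'n)) $ d $ c = (M *v (N *v axis c 1)) $ d"
  by (simp add: matrix_matrix_mult_def matrix_vector_mult_def axis_def if_distrib cong: if_cong)

lemma pair_sym_abstract:
  fixes P :: "'a \<Rightarrow> 'a \<Rightarrow> 'a \<Rightarrow> 'a \<Rightarrow> real"
  assumes A1: "\<And>d c a b. P d c a b = - P d c b a"
    and A2: "\<And>d c a b. P d c a b = - P c d a b"
    and B: "\<And>d c a b. P d c a b + P d a b c + P d b c a = 0"
  shows "P d c a b = P a b d c"
proof -
  have D: "P x y z w = P y x w z" for x y z w using A1[of x y z w] A2[of x y w z] by simp
  have 1: "P d c a b + P d a b c + P d b c a = 0" by (rule B)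
  have 2: "P c d b a + P c b a d + P c a d b = 0" by (rule B)
  have 3: "P a b d c + P a d c b + P a c b d = 0" by (rule B)
  have 4: "P b a c d + P b c d a + P b d a c = 0" by (rule B)
  show ?thesis using 1 2 3 4 D[of c d b a] D[of a d c b] D[of b d a c] D[of b c d a] D[of a c b d] D[of b a c d]
    by linarith
qed

context rgeo begin

lemma Rm_anti: "Rm b a y = - Rm a b y"
  unfolding Rm_def by (simp add: algebra_simps)

lemma pder_Gam_sym:
  assumes x: "x \<in> U"
  shows "pder [c] (Gam a) x *v axis b 1 = pder [c] (Gam b) x *v axis a 1"
proof -
  have e: "pder [c] (\<lambda>y. Gam a y *v axis b 1) x = pder [c] (Gam a) x *v axis b 1" for a b
    using pder_mv[OF Gam_diff[OF x] differentiable_const, of c a "axis b 1"] by (simp add: pder_const)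
  have "pder [c] (\<lambda>y. Gam a y *v axis b 1) x = pder [c] (\<lambda>y. Gam b y *v axis a 1) x"
    by (rule pder_eq_on[OF U x]) (use Gam_sym_v in blast)
  then show ?thesis using e by simp
qed

lemma g_Rm_anti:
  assumes x: "x \<in> U"
  shows "g x ** Rm a b x + transpose (g x ** Rm a b x) = 0"
proof -
  have mc: "\<forall>y\<in>U. pder [b] g y = g y ** Gam b y + transpose (Gam b y) ** g y" for b
    using metric_compat by blast
  have dT: "(\<lambda>y. transpose (Gam b y)) differentiable at x" for b
    using diff_lin[OF bl_transpose Gam_diff[OF x]] .
  have d2: "pder [a,b] g x = pder [a] g x ** Gam b x + g x ** pder [a] (Gam b) x
      + transpose (pder [a] (Gam b) x) ** g x + transpose (Gam b x) ** pder [a] g x" for a b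
  proof -
    have "pder [a,b] g x = pder [a] (\<lambda>y. g y ** Gam b y + transpose (Gam b y) ** g y) x"
      unfolding pder_pder[symmetric] by (rule pder_eq_on[OF U x mc])
    also have "\<dots> = pder [a] (\<lambda>y. g y ** Gam b y) x + pder [a] (\<lambda>y. transpose (Gam b y) ** g y) x"
      by (rule pder_add) (intro diff_bil[OF bb_mm] g_diff Gam_diff dT x)+
    also have "\<dots> = pder [a] g x ** Gam b x + g x ** pder [a] (Gam b) x
      + transpose (pder [a] (Gam b) x) ** g x + transpose (Gam b x) ** pder [a] g x"
      by (simp add: pder_mm[OF g_diff[OF x] Gam_diff[OF x]] pder_mm[OF dT g_diff[OF x]] pder_transpose[OF Gam_diff[OF x]])
    finally show ?thesis .
  qed
  have cl: "pder [a,b] g x = pder [b,a] g x" by (rule clairaut[OF U x g_smooth])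
  have "0 = pder [a,b] g x - pder [b,a] g x" using cl by simp
  also have "\<dots> = g x ** Rm a b x + transpose (Rm a b x) ** g x"
    unfolding d2 metric_compat[OF x] Rm_def
    by (simp add: mm_simps tr_add tr_diff tr_mm algebra_simps)
  also have "\<dots> = g x ** Rm a b x + transpose (g x ** Rm a b x)"
    by (simp add: tr_mm g_sym_mat[OF x])
  finally show ?thesis by simp
qed

lemma bianchi1:
  assumes x: "x \<in> U"
  shows "Rm a b x *v axis c 1 + Rm b c x *v axis a 1 + Rm c a x *v axis b 1 = 0"
proof -
  note s1 = pder_Gam_sym[OF x] and s2 = Gam_sym_v[OF x]
  show ?thesis
    unfolding Rm_def
    by (simp add: matrix_vector_mult_add_rdistrib matrix_vector_mult_diff_rdistrib
        matrix_vector_mul_assoc[symmetric] s1 s2 algebra_simps)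
qed

definition Rl :: "real^'m \<Rightarrow> 'm \<Rightarrow> 'm \<Rightarrow> 'm \<Rightarrow> 'm \<Rightarrow> real" where
  "Rl y d c a b = (g y ** Rm a b y) $ d $ c"

lemma Rl_pair:
  assumes x: "x \<in> U"
  shows "Rl x d c a b = Rl x a b d c"
proof (rule pair_sym_abstract[of "Rl x"])
  show "Rl x d c a b = - Rl x d c b a" for d c a b
    unfolding Rl_def Rm_anti[of b a] by (simp add: mm_neg_l)
  show "Rl x d c a b = - Rl x c d a b" for d c a b
  proof -
    have "(g x ** Rm a b x + transpose (g x ** Rm a b x)) $ d $ c = 0"
      using g_Rm_anti[OF x] by simp
    then show ?thesis unfolding Rl_def by (simp add: transpose_nth)
  qed
  show "Rl x d c a b + Rl x d a b c + Rl x d b c a = 0" for d c a b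
  proof -
    have "(g x *v (Rm a b x *v axis c 1 + Rm b c x *v axis a 1 + Rm c a x *v axis b 1)) $ d = 0"
      using bianchi1[OF x] by simp
    then show ?thesis unfolding Rl_def mm_nth_mv by (simp add: matrix_vector_right_distrib)
  qed
qed

end


context rgeo begin

definition DRt :: "'m \<Rightarrow> 'm \<Rightarrow> 'm \<Rightarrow> real^'m \<Rightarrow> real^'m^'m" where
  "DRt c a b y = pder [c] (Rm a b) y + Gam c y ** Rm a b y - Rm a b y ** Gam c y"
definition DRs1 :: "'m \<Rightarrow> 'm \<Rightarrow> 'm \<Rightarrow> real^'m \<Rightarrow> real^'m^'m" where
  "DRs1 c a b y = (\<Sum>l\<in>UNIV. Gam c y $ l $ a *\<^sub>R Rm l b y)"
definition DRs2 :: "'m \<Rightarrow> 'm \<Rightarrow> 'm \<Rightarrow> real^'m \<Rightarrow> real^'m^'m" where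
  "DRs2 c a b y = (\<Sum>l\<in>UNIV. Gam c y $ l $ b *\<^sub>R Rm a l y)"
definition DR :: "'m \<Rightarrow> 'm \<Rightarrow> 'm \<Rightarrow> real^'m \<Rightarrow> real^'m^'m" where
  "DR c a b y = DRt c a b y - DRs1 c a b y - DRs2 c a b y"

lemma pGam_diff: "y \<in> U \<Longrightarrow> pder [c] (Gam a) differentiable at y"
  using smooth_diff[OF smooth_pder[OF Gam_smooth]] by blast

lemma pder_Rm:
  assumes x: "x \<in> U"
  shows "pder [c] (Rm a b) x = pder [c,a] (Gam b) x - pder [c,b] (Gam a) x
     + (pder [c] (Gam a) x ** Gam b x + Gam a x ** pder [c] (Gam b) x)
     - (pder [c] (Gam b) x ** Gam a x + Gam b x ** pder [c] (Gam a) x)"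
proof -
  have d1: "(\<lambda>y. pder [a] (Gam b) y - pder [b] (Gam a) y) differentiable at x"
    using pGam_diff[OF x] by (intro differentiable_diff) auto
  have d2: "(\<lambda>y. Gam a y ** Gam b y) differentiable at x" for a b
    using diff_bil[OF bb_mm Gam_diff[OF x] Gam_diff[OF x]] .
  have d3: "(\<lambda>y. pder [a] (Gam b) y - pder [b] (Gam a) y + Gam a y ** Gam b y) differentiable at x"
    using d1 d2 by (intro differentiable_add) auto
  have "Rm a b = (\<lambda>y. (pder [a] (Gam b) y - pder [b] (Gam a) y + Gam a y ** Gam b y) - Gam b y ** Gam a y)"
    by (rule ext) (simp add: Rm_def)
  then have "pder [c] (Rm a b) x = pder [c] (\<lambda>y. (pder [a] (Gam b) y - pder [b] (Gam a) y + Gam a y ** Gam b y) - Gam b y ** Gam a y) x"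
    by simp
  also have "\<dots> = pder [c] (\<lambda>y. pder [a] (Gam b) y - pder [b] (Gam a) y + Gam a y ** Gam b y) x - pder [c] (\<lambda>y. Gam b y ** Gam a y) x"
    by (rule pder_diff[OF d3 d2])
  also have "pder [c] (\<lambda>y. pder [a] (Gam b) y - pder [b] (Gam a) y + Gam a y ** Gam b y) x
     = pder [c] (\<lambda>y. pder [a] (Gam b) y - pder [b] (Gam a) y) x + pder [c] (\<lambda>y. Gam a y ** Gam b y) x"
    by (rule pder_add[OF d1 d2])
  also have "pder [c] (\<lambda>y. pder [a] (Gam b) y - pder [b] (Gam a) y) x = pder [c,a] (Gam b) x - pder [c,b] (Gam a) x"
    using pder_diff[OF pGam_diff[OF x] pGam_diff[OF x]] by (simp add: pder_pder)
  finally show ?thesis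
    by (simp add: pder_mm[OF Gam_diff[OF x] Gam_diff[OF x]])
qed

lemma DRt_cyc:
  assumes x: "x \<in> U"
  shows "DRt c a b x + DRt a b c x + DRt b c a x = 0"
proof -
  have cl1: "pder [c,a] (Gam b) x = pder [a,c] (Gam b) x" by (rule clairaut[OF U x Gam_smooth])
  have cl2: "pder [c,b] (Gam a) x = pder [b,c] (Gam a) x" by (rule clairaut[OF U x Gam_smooth])
  have cl3: "pder [a,b] (Gam c) x = pder [b,a] (Gam c) x" by (rule clairaut[OF U x Gam_smooth])
  show ?thesis
    unfolding DRt_def pder_Rm[OF x] Rm_def cl1 cl2 cl3
    by (simp add: mm_simps algebra_simps)
qed

lemma DRs_cancel:
  assumes x: "x \<in> U"
  shows "DRs1 c a b x + DRs2 a b c x = 0"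
proof -
  have "DRs1 c a b x + DRs2 a b c x = (\<Sum>l\<in>UNIV. Gam c x $ l $ a *\<^sub>R Rm l b x + Gam a x $ l $ c *\<^sub>R Rm b l x)"
    unfolding DRs1_def DRs2_def by (simp add: sum.distrib)
  also have "\<dots> = 0"
  proof (rule sum.neutral, rule ballI)
    fix l
    have "Gam a x $ l $ c = Gam c x $ l $ a" by (rule Gam_sym[OF x])
    then show "Gam c x $ l $ a *\<^sub>R Rm l b x + Gam a x $ l $ c *\<^sub>R Rm b l x = 0"
      by (simp add: Rm_anti[of b l])
  qed
  finally show ?thesis .
qed

lemma bianchi2:
  assumes x: "x \<in> U"
  shows "DR c a b x + DR a b c x + DR b c a x = 0"
proof -
  have "DR c a b x + DR a b c x + DR b c a x = (DRt c a b x + DRt a b c x + DRt b c a x)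
     - (DRs1 c a b x + DRs2 a b c x) - (DRs1 a b c x + DRs2 b c a x) - (DRs1 b c a x + DRs2 c a b x)"
    unfolding DR_def by (simp add: algebra_simps)
  then show ?thesis using DRt_cyc[OF x] DRs_cancel[OF x] by simp
qed

lemma DR_anti:
  assumes x: "x \<in> U"
  shows "DR c b a x = - DR c a b x"
proof -
  have "Rm b a = (\<lambda>y. - Rm a b y)" by (rule ext) (rule Rm_anti)
  then have "pder [c] (Rm b a) x = - pder [c] (Rm a b) x"
    using pder_minus[OF smooth_diff[OF Rm_smooth x]] by simp
  then have 1: "DRt c b a x = - DRt c a b x"
    unfolding DRt_def by (simp add: Rm_anti[of b a] mm_simps)
  have 2: "DRs1 c b a x = - DRs2 c a b x"
    unfolding DRs1_def DRs2_def by (simp add: Rm_anti[of a] sum_negf)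
  have 3: "DRs2 c b a x = - DRs1 c a b x"
    unfolding DRs1_def DRs2_def by (simp add: Rm_anti[of b] sum_negf)
  show ?thesis unfolding DR_def 1 2 3 by simp
qed

end


lemma inner_mv_tr: "(u::real^'m::finite) \<bullet> ((A::real^'n::finite^'m) *v v) = (transpose A *v u) \<bullet> v"
  by (metis dot_lmul_matrix transpose_matrix_vector inner_commute)

lemma inv_mv_zero: "invertible (A::real^'n::finite^'n) \<Longrightarrow> A *v v = 0 \<Longrightarrow> v = 0"
  by (metis invertible_def matrix_vector_mul_assoc matrix_vector_mul_lid matrix_vector_mult_0_right)

lemma outer_mv: "(\<chi> i j. (u::real^'n::finite) $ i * (w::real^'m::finite) $ j) *v v = (w \<bullet> v) *\<^sub>R u"
  by (simp add: matrix_vector_mult_def vec_eq_iff inner_vec_def sum_distrib_left algebra_simps)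

locale kenm = rgeo U g for U :: "(real^'m::finite) set" and g +
  fixes n :: nat and \<beta> :: real and f Q :: "real^'m \<Rightarrow> real^'m^'m" and \<xi> \<eta> :: "real^'m \<Rightarrow> real^'m"
  assumes wk: "weak_beta_kenmotsu n U \<beta> f Q \<xi> \<eta> g"
begin

lemma wacm: "weak_almost_contact_metric n U f Q \<xi> \<eta> g"
  using wk unfolding weak_beta_kenmotsu_def by blast

lemma card_m: "CARD('m) = 2 * n + 1" using wacm unfolding weak_almost_contact_metric_def by blast
lemma f_smooth: "smooth_on U f" using wacm unfolding weak_almost_contact_metric_def by blast
lemma Q_smooth: "smooth_on U Q" using wacm unfolding weak_almost_contact_metric_def by blast
lemma xi_smooth: "smooth_on U \<xi>" using wacm unfolding weak_almost_contact_metric_def by blast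
lemma eta_smooth: "smooth_on U \<eta>" using wacm unfolding weak_almost_contact_metric_def by blast

lemma W: assumes "y \<in> U" shows
  "rank (f y) = 2 * n"
  "f y ** f y = - Q y + (\<chi> i j. \<xi> y $ i * \<eta> y $ j)"
  "\<eta> y \<bullet> \<xi> y = 1"
  "Q y *v \<xi> y = \<xi> y"
  "invertible (Q y)"
  "\<And>v. \<eta> y \<bullet> v = 0 \<Longrightarrow> \<eta> y \<bullet> (f y *v v) = 0"
  "\<And>u v. gmet (g y) (f y *v u) (f y *v v) = gmet (g y) u (Q y *v v) - (\<eta> y \<bullet> u) * (\<eta> y \<bullet> v)"
  using wacm assms unfolding weak_almost_contact_metric_def by auto

lemma f2: "y \<in> U \<Longrightarrow> f y *v (f y *v v) = - (Q y *v v) + (\<eta> y \<bullet> v) *\<^sub>R \<xi> y"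
proof -
  assume y: "y \<in> U"
  have "f y *v (f y *v v) = (f y ** f y) *v v" by (simp add: matrix_vector_mul_assoc)
  also have "\<dots> = - (Q y *v v) + (\<eta> y \<bullet> v) *\<^sub>R \<xi> y"
    unfolding W(2)[OF y] by (simp only: matrix_vector_mult_add_rdistrib outer_mv) (simp add: matrix_vector_mult_def vec_eq_iff sum_negf)
  finally show ?thesis .
qed

lemma ker_eta: "y \<in> U \<Longrightarrow> f y *v v = 0 \<Longrightarrow> \<eta> y \<bullet> v = 0 \<Longrightarrow> v = 0"
proof -
  assume y: "y \<in> U" and fv: "f y *v v = 0" and ev: "\<eta> y \<bullet> v = 0"
  have "Q y *v v = 0" using f2[OF y, of v] fv ev by simp
  then show "v = 0" using inv_mv_zero[OF W(5)[OF y]] by blast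
qed

lemma f_xi: "y \<in> U \<Longrightarrow> f y *v \<xi> y = 0"
proof -
  assume y: "y \<in> U"
  have "rank (f y) \<noteq> CARD('m)" using W(1)[OF y] card_m by simp
  then obtain k where k: "k \<noteq> 0" "f y *v k = 0" using matrix_nonfull_linear_equations_eq by blast
  have ek: "\<eta> y \<bullet> k \<noteq> 0" using ker_eta[OF y k(2)] k(1) by blast
  define k' where "k' = (1 / (\<eta> y \<bullet> k)) *\<^sub>R k"
  have fk': "f y *v k' = 0" unfolding k'_def by (simp add: matrix_vector_mult_scaleR k(2))
  have ek': "\<eta> y \<bullet> k' = 1" unfolding k'_def using ek by simp
  have "Q y *v k' = \<xi> y" using f2[OF y, of k'] fk' ek' by simp
  then have "Q y *v (k' - \<xi> y) = 0" using W(4)[OF y] by (simp add: matrix_vector_mult_diff_distrib)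
  then have "k' - \<xi> y = 0" using inv_mv_zero[OF W(5)[OF y]] by blast
  then have "k' = \<xi> y" by simp
  then show ?thesis using fk' by simp
qed

lemma ker_f: "y \<in> U \<Longrightarrow> f y *v v = 0 \<Longrightarrow> v = (\<eta> y \<bullet> v) *\<^sub>R \<xi> y"
proof -
  assume y: "y \<in> U" and fv: "f y *v v = 0"
  define w where "w = v - (\<eta> y \<bullet> v) *\<^sub>R \<xi> y"
  have "f y *v w = 0" unfolding w_def using fv f_xi[OF y] by (simp add: matrix_vector_mult_diff_distrib matrix_vector_mult_scaleR)
  moreover have "\<eta> y \<bullet> w = 0" unfolding w_def using W(3)[OF y] by (simp add: inner_diff_right)
  ultimately have "w = 0" using ker_eta[OF y] by blast
  then show ?thesis unfolding w_def by simp
qed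

lemma eta_f: "y \<in> U \<Longrightarrow> \<eta> y \<bullet> (f y *v u) = 0"
proof -
  assume y: "y \<in> U"
  define w where "w = u - (\<eta> y \<bullet> u) *\<^sub>R \<xi> y"
  have ew: "\<eta> y \<bullet> w = 0" unfolding w_def using W(3)[OF y] by (simp add: inner_diff_right)
  have "f y *v u = f y *v w" unfolding w_def using f_xi[OF y] by (simp add: matrix_vector_mult_diff_distrib matrix_vector_mult_scaleR)
  then show ?thesis using W(6)[OF y ew] by simp
qed

lemma g_xi: "y \<in> U \<Longrightarrow> g y *v \<xi> y = \<eta> y"
proof -
  assume y: "y \<in> U"
  have h: "u \<bullet> (g y *v \<xi> y) = u \<bullet> \<eta> y" for u
  proof -
    have "gmet (g y) (f y *v u) (f y *v \<xi> y) = gmet (g y) u (Q y *v \<xi> y) - (\<eta> y \<bullet> u) * (\<eta> y \<bullet> \<xi> y)"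
      by (rule W(7)[OF y])
    then have "0 = u \<bullet> (g y *v \<xi> y) - \<eta> y \<bullet> u"
      using f_xi[OF y] W(3)[OF y] W(4)[OF y] unfolding gmet_def by simp
    moreover have "\<eta> y \<bullet> u = u \<bullet> \<eta> y" by (rule inner_commute)
    ultimately show ?thesis by simp
  qed
  define d where "d = g y *v \<xi> y - \<eta> y"
  have "d \<bullet> d = d \<bullet> (g y *v \<xi> y) - d \<bullet> \<eta> y" unfolding d_def by (rule inner_diff_right)
  also have "\<dots> = 0" using h[of d] by simp
  finally have "d = 0" by simp
  then show ?thesis unfolding d_def by simp
qed

lemma xi_unit: "y \<in> U \<Longrightarrow> \<xi> y \<bullet> (g y *v \<xi> y) = 1"
  using g_xi W(3) by (simp add: inner_commute)


lemma kenm_hyp: "smooth_on U X \<Longrightarrow> smooth_on U Y \<Longrightarrow> x \<in> U \<Longrightarrow>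
   nabla g X (\<lambda>y. f y *v Y y) x - f x *v nabla g X Y x
          = \<beta> *\<^sub>R (gmet (g x) (f x *v X x) (Y x) *\<^sub>R \<xi> x - (\<eta> x \<bullet> Y x) *\<^sub>R (f x *v X x))"
  using wk unfolding weak_beta_kenmotsu_def by blast

lemma xi_diff: "y \<in> U \<Longrightarrow> \<xi> differentiable at y" using smooth_diff[OF xi_smooth] .
lemma eta_diff: "y \<in> U \<Longrightarrow> \<eta> differentiable at y" using smooth_diff[OF eta_smooth] .
lemma f_diff: "y \<in> U \<Longrightarrow> f differentiable at y" using smooth_diff[OF f_smooth] .

lemma eta_cd_xi:
  assumes x: "x \<in> U"
  shows "\<eta> x \<bullet> cd a \<xi> x = 0"
proof -
  have dGx: "(\<lambda>y. g y *v \<xi> y) differentiable at x" using diff_bil[OF bb_mv g_diff[OF x] xi_diff[OF x]] .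
  have "pder [a] (\<lambda>y. \<xi> y \<bullet> (g y *v \<xi> y)) x = pder [a] (\<lambda>y. 1::real) x"
    by (rule pder_eq_on[OF U x]) (use xi_unit in blast)
  then have 0: "pder [a] (\<lambda>y. \<xi> y \<bullet> (g y *v \<xi> y)) x = 0" by (simp add: pder_const)
  have "pder [a] (\<lambda>y. \<xi> y \<bullet> (g y *v \<xi> y)) x = pder [a] \<xi> x \<bullet> (g x *v \<xi> x) + \<xi> x \<bullet> pder [a] (\<lambda>y. g y *v \<xi> y) x"
    by (rule pder_inner[OF xi_diff[OF x] dGx])
  also have "\<dots> = pder [a] \<xi> x \<bullet> \<eta> x + \<xi> x \<bullet> (pder [a] g x *v \<xi> x + g x *v pder [a] \<xi> x)"
    by (simp add: pder_mv[OF g_diff[OF x] xi_diff[OF x]] g_xi[OF x])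
  also have "\<dots> = 2 * (\<eta> x \<bullet> cd a \<xi> x)"
  proof -
    have 1: "\<xi> x \<bullet> (g x *v v) = \<eta> x \<bullet> v" for v
      using inner_mv_tr[of "\<xi> x" "g x" v] g_sym_mat[OF x] g_xi[OF x] by simp
    have 2: "\<xi> x \<bullet> (v v* Gam a x) = (Gam a x *v \<xi> x) \<bullet> v" for v
      by (metis dot_lmul_matrix inner_commute)
    show ?thesis
      unfolding metric_compat[OF x] cd_def
      by (simp add: matrix_vector_mult_add_rdistrib matrix_vector_mul_assoc[symmetric] inner_add_right 1 2
          g_xi[OF x] inner_commute[of "pder [a] \<xi> x"] inner_commute[of "Gam a x *v \<xi> x"])
  qed
  finally show ?thesis using 0 by simp
qed

lemma cd_xi:
  assumes x: "x \<in> U"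
  shows "cd a \<xi> x = \<beta> *\<^sub>R (axis a 1 - (\<eta> x $ a) *\<^sub>R \<xi> x)"
proof -
  have dfx: "(\<lambda>y. f y *v \<xi> y) differentiable at x" using diff_bil[OF bb_mv f_diff[OF x] xi_diff[OF x]] .
  have "nabla g (coord a) (\<lambda>y. f y *v \<xi> y) x = cd a (\<lambda>y. f y *v \<xi> y) x" by (rule nabla_coord[OF dfx])
  also have "\<dots> = 0"
  proof -
    have "pder [a] (\<lambda>y. f y *v \<xi> y) x = 0" by (rule pder_zero_on[OF U x]) (use f_xi in blast)
    then show ?thesis unfolding cd_def using f_xi[OF x] by simp
  qed
  finally have 1: "nabla g (coord a) (\<lambda>y. f y *v \<xi> y) x = 0" .
  have 2: "nabla g (coord a) \<xi> x = cd a \<xi> x" by (rule nabla_coord[OF xi_diff[OF x]])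
  have 3: "gmet (g x) (f x *v coord a x) (\<xi> x) = 0"
    unfolding gmet_def g_xi[OF x] using eta_f[OF x, of "coord a x"] by (simp add: inner_commute)
  have "- (f x *v cd a \<xi> x) = \<beta> *\<^sub>R (- (f x *v axis a 1))"
    using kenm_hyp[OF coord_smooth xi_smooth x, of a] 1 2 3 W(3)[OF x] by (simp add: coord_def)
  then have "f x *v (cd a \<xi> x - \<beta> *\<^sub>R axis a 1) = 0"
    by (simp add: matrix_vector_mult_diff_distrib matrix_vector_mult_scaleR)
  then have "cd a \<xi> x - \<beta> *\<^sub>R axis a 1 = (\<eta> x \<bullet> (cd a \<xi> x - \<beta> *\<^sub>R axis a 1)) *\<^sub>R \<xi> x"
    by (rule ker_f[OF x])
  also have "\<eta> x \<bullet> (cd a \<xi> x - \<beta> *\<^sub>R axis a 1) = - \<beta> * (\<eta> x $ a)"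
    using eta_cd_xi[OF x, of a] by (simp add: inner_diff_right inner_axis)
  finally show ?thesis by (simp add: algebra_simps)
qed

end


context kenm begin

lemma pder_xi: "x \<in> U \<Longrightarrow> pder [a] \<xi> x = \<beta> *\<^sub>R (axis a 1 - (\<eta> x $ a) *\<^sub>R \<xi> x) - Gam a x *v \<xi> x"
  using cd_xi[of x a] unfolding cd_def by (simp add: algebra_simps)

lemma pder_eta:
  assumes x: "x \<in> U"
  shows "pder [a] \<eta> x = transpose (Gam a x) *v \<eta> x + \<beta> *\<^sub>R (g x *v axis a 1 - (\<eta> x $ a) *\<^sub>R \<eta> x)"
proof -
  have "pder [a] \<eta> x = pder [a] (\<lambda>y. g y *v \<xi> y) x"
    by (rule pder_eq_on[OF U x]) (use g_xi in auto)
  also have "\<dots> = pder [a] g x *v \<xi> x + g x *v pder [a] \<xi> x"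
    by (rule pder_mv[OF g_diff[OF x] xi_diff[OF x]])
  also have "\<dots> = transpose (Gam a x) *v \<eta> x + \<beta> *\<^sub>R (g x *v axis a 1 - (\<eta> x $ a) *\<^sub>R \<eta> x)"
    unfolding metric_compat[OF x] pder_xi[OF x]
    by (simp add: matrix_vector_mult_add_rdistrib matrix_vector_right_distrib matrix_vector_mult_diff_distrib
        matrix_vector_mult_scaleR matrix_vector_mul_assoc[symmetric] g_xi[OF x] algebra_simps)
  finally show ?thesis .
qed

lemma pder_pxi:
  assumes x: "x \<in> U"
  shows "pder [a,b] \<xi> x = - \<beta> *\<^sub>R ((pder [a] \<eta> x $ b) *\<^sub>R \<xi> x + (\<eta> x $ b) *\<^sub>R pder [a] \<xi> x)
           - (pder [a] (Gam b) x *v \<xi> x + Gam b x *v pder [a] \<xi> x)"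
proof -
  have e: "\<forall>y\<in>U. pder [b] \<xi> y = \<beta> *\<^sub>R (axis b 1 - (\<eta> y $ b) *\<^sub>R \<xi> y) - Gam b y *v \<xi> y"
    using pder_xi by blast
  have de: "(\<lambda>y. \<eta> y $ b) differentiable at x" using diff_lin[OF bounded_linear_vec_nth eta_diff[OF x]] .
  have d1: "(\<lambda>y. (\<eta> y $ b) *\<^sub>R \<xi> y) differentiable at x" using diff_bil[OF bounded_bilinear_scaleR de xi_diff[OF x]] .
  have d2: "(\<lambda>y. axis b 1 - (\<eta> y $ b) *\<^sub>R \<xi> y) differentiable at x" using d1 by (intro differentiable_diff) auto
  have d3: "(\<lambda>y. \<beta> *\<^sub>R (axis b 1 - (\<eta> y $ b) *\<^sub>R \<xi> y)) differentiable at x"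
    using diff_lin[OF bounded_linear_scaleR_right d2] .
  have d4: "(\<lambda>y. Gam b y *v \<xi> y) differentiable at x" using diff_bil[OF bb_mv Gam_diff[OF x] xi_diff[OF x]] .
  have "pder [a,b] \<xi> x = pder [a] (\<lambda>y. \<beta> *\<^sub>R (axis b 1 - (\<eta> y $ b) *\<^sub>R \<xi> y) - Gam b y *v \<xi> y) x"
    unfolding pder_pder[symmetric] by (rule pder_eq_on[OF U x e])
  also have "\<dots> = pder [a] (\<lambda>y. \<beta> *\<^sub>R (axis b 1 - (\<eta> y $ b) *\<^sub>R \<xi> y)) x - pder [a] (\<lambda>y. Gam b y *v \<xi> y) x"
    by (rule pder_diff[OF d3 d4])
  also have "pder [a] (\<lambda>y. \<beta> *\<^sub>R (axis b 1 - (\<eta> y $ b) *\<^sub>R \<xi> y)) x = \<beta> *\<^sub>R pder [a] (\<lambda>y. axis b 1 - (\<eta> y $ b) *\<^sub>R \<xi> y) x"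
    by (rule pder_cscale[OF d2])
  also have "pder [a] (\<lambda>y. axis b 1 - (\<eta> y $ b) *\<^sub>R \<xi> y) x = pder [a] (\<lambda>y. axis b (1::real)) x - pder [a] (\<lambda>y. (\<eta> y $ b) *\<^sub>R \<xi> y) x"
    by (rule pder_diff[OF differentiable_const d1])
  also have "pder [a] (\<lambda>y. (\<eta> y $ b) *\<^sub>R \<xi> y) x = pder [a] (\<lambda>y. \<eta> y $ b) x *\<^sub>R \<xi> x + (\<eta> x $ b) *\<^sub>R pder [a] \<xi> x"
    by (rule pder_scaleR[OF de xi_diff[OF x]])
  also have "pder [a] (\<lambda>y. \<eta> y $ b) x = pder [a] \<eta> x $ b" by (rule pder_nth[OF eta_diff[OF x]])
  also have "pder [a] (\<lambda>y. Gam b y *v \<xi> y) x = pder [a] (Gam b) x *v \<xi> x + Gam b x *v pder [a] \<xi> x"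
    by (rule pder_mv[OF Gam_diff[OF x] xi_diff[OF x]])
  finally show ?thesis by (simp add: pder_const algebra_simps)
qed

lemma deta_sym:
  assumes x: "x \<in> U"
  shows "pder [a] \<eta> x $ b = pder [b] \<eta> x $ a"
proof -
  have 1: "(transpose (Gam a x) *v \<eta> x) $ b = (transpose (Gam b x) *v \<eta> x) $ a"
    by (simp add: matrix_vector_mult_def transpose_def Gam_sym[OF x, of a _ b])
  have 2: "(g x *v axis a 1) $ b = (g x *v axis b 1) $ a"
    by (simp add: matrix_vector_mult_basis column_def g_sym[OF x])
  show ?thesis unfolding pder_eta[OF x] using 1 2 by (simp add: algebra_simps)
qed

lemma Rm_xi:
  assumes x: "x \<in> U"
  shows "Rm a b x *v \<xi> x = \<beta>\<^sup>2 *\<^sub>R ((\<eta> x $ a) *\<^sub>R axis b 1 - (\<eta> x $ b) *\<^sub>R axis a 1)"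
proof -
  have cl: "pder [a,b] \<xi> x = pder [b,a] \<xi> x" by (rule clairaut[OF U x xi_smooth])
  have A: "pder [a] (Gam b) x *v \<xi> x = - \<beta> *\<^sub>R ((pder [a] \<eta> x $ b) *\<^sub>R \<xi> x + (\<eta> x $ b) *\<^sub>R pder [a] \<xi> x)
           - Gam b x *v pder [a] \<xi> x - pder [a,b] \<xi> x"
    using pder_pxi[OF x, of a b] by (simp add: algebra_simps)
  have B: "pder [b] (Gam a) x *v \<xi> x = - \<beta> *\<^sub>R ((pder [a] \<eta> x $ b) *\<^sub>R \<xi> x + (\<eta> x $ a) *\<^sub>R pder [b] \<xi> x)
           - Gam a x *v pder [b] \<xi> x - pder [a,b] \<xi> x"
    using pder_pxi[OF x, of b a] cl deta_sym[OF x, of b a] by (simp add: algebra_simps)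
  have "Rm a b x *v \<xi> x = pder [a] (Gam b) x *v \<xi> x - pder [b] (Gam a) x *v \<xi> x
      + Gam a x *v (Gam b x *v \<xi> x) - Gam b x *v (Gam a x *v \<xi> x)"
    unfolding Rm_def by (simp add: matrix_vector_mult_add_rdistrib matrix_vector_mult_diff_rdistrib matrix_vector_mul_assoc)
  also have "\<dots> = \<beta>\<^sup>2 *\<^sub>R ((\<eta> x $ a) *\<^sub>R axis b 1 - (\<eta> x $ b) *\<^sub>R axis a 1)"
    unfolding A B pder_xi[OF x]
    by (simp add: matrix_vector_right_distrib matrix_vector_mult_diff_distrib matrix_vector_mult_scaleR
        Gam_sym_v[OF x, of a b] power2_eq_square algebra_simps)
  finally show ?thesis .
qed

end


definition outer :: "real^'n::finite \<Rightarrow> real^'m::finite \<Rightarrow> real^'m^'n" where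
  "outer u v = (\<chi> i j. u $ i * v $ j)"

lemma outer_nth: "outer u v $ i $ j = u $ i * v $ j" by (simp add: outer_def)
lemma outer_add_l: "outer (u + w) v = outer u v + outer w v" by (simp add: outer_def vec_eq_iff algebra_simps)
lemma outer_add_r: "outer u (v + w) = outer u v + outer u w" by (simp add: outer_def vec_eq_iff algebra_simps)
lemma outer_diff_l: "outer (u - w) v = outer u v - outer w v" by (simp add: outer_def vec_eq_iff algebra_simps)
lemma outer_diff_r: "outer u (v - w) = outer u v - outer u w" by (simp add: outer_def vec_eq_iff algebra_simps)
lemma outer_neg_l: "outer (- u) v = - outer u v" by (simp add: outer_def vec_eq_iff)
lemma outer_neg_r: "outer u (- v) = - outer u v" by (simp add: outer_def vec_eq_iff)
lemma outer_scale_l: "outer (c *\<^sub>R u) v = c *\<^sub>R outer u v" by (simp add: outer_def vec_eq_iff)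
lemma outer_scale_r: "outer u (c *\<^sub>R v) = c *\<^sub>R outer u v" by (simp add: outer_def vec_eq_iff algebra_simps)
lemma outer_zero_l: "outer 0 v = 0" by (simp add: outer_def vec_eq_iff)
lemma outer_zero_r: "outer u 0 = 0" by (simp add: outer_def vec_eq_iff)
lemma outer_mm_r: "outer u v ** (A::real^'p::finite^'m::finite) = outer u (transpose A *v v)"
  by (simp add: outer_def matrix_matrix_mult_def matrix_vector_mult_def transpose_def vec_eq_iff sum_distrib_left algebra_simps)
lemma outer_mm_l: "(A::real^'n::finite^'p::finite) ** outer u v = outer (A *v u) v"
  by (simp add: outer_def matrix_matrix_mult_def matrix_vector_mult_def vec_eq_iff sum_distrib_left sum_distrib_right algebra_simps)
lemma outer_sum_r: "(\<Sum>l\<in>S. c l *\<^sub>R outer u (w l)) = outer u (\<Sum>l\<in>S. c l *\<^sub>R w l)"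
  by (induction S rule: infinite_finite_induct) (auto simp: outer_zero_r outer_add_r outer_scale_r)
lemma outer_sum_l: "(\<Sum>l\<in>S. c l *\<^sub>R outer (w l) v) = outer (\<Sum>l\<in>S. c l *\<^sub>R w l) v"
  by (induction S rule: infinite_finite_induct) (auto simp: outer_zero_l outer_add_l outer_scale_l)
lemmas outer_simps = outer_add_l outer_add_r outer_diff_l outer_diff_r outer_neg_l outer_neg_r
  outer_scale_l outer_scale_r outer_zero_l outer_zero_r outer_mm_r outer_mm_l

lemma bb_outer: "bounded_bilinear (outer :: real^'n::finite \<Rightarrow> real^'m::finite \<Rightarrow> real^'m^'n)"
  unfolding bilinear_conv_bounded_bilinear[symmetric] bilinear_def
  by (auto simp: linear_iff outer_simps)

lemma col_sum: "(\<Sum>l\<in>UNIV. (A::real^'n::finite^'m::finite) $ l $ b *\<^sub>R axis l 1) = A *v axis b 1"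
proof -
  have "(\<Sum>l\<in>UNIV. A $ l $ b *\<^sub>R axis l 1) $ i = (A *v axis b 1) $ i" for i
  proof -
    have "(\<Sum>l\<in>UNIV. A $ l $ b *\<^sub>R axis l (1::real)) $ i = (\<Sum>l\<in>UNIV. if l = i then A $ l $ b else 0)"
      unfolding sum_component by (rule sum.cong) (auto simp: axis_def)
    then show ?thesis by (simp add: matrix_vector_mult_basis column_def)
  qed
  then show ?thesis by (simp add: vec_eq_iff)
qed

lemma mv_sum: "(\<Sum>l\<in>S. c l *\<^sub>R ((A::real^'n::finite^'m::finite) *v w l)) = A *v (\<Sum>l\<in>S. c l *\<^sub>R w l)"
  by (induction S rule: infinite_finite_induct) (auto simp: matrix_vector_right_distrib matrix_vector_mult_scaleR)

context kenm begin

definition Mx :: "'m \<Rightarrow> real^'m \<Rightarrow> real^'m^'m" where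
  "Mx b y = (\<Sum>c\<in>UNIV. (\<xi> y $ c) *\<^sub>R Rm b c y)"

lemma g_col_row: "y \<in> U \<Longrightarrow> (g y *v axis b 1) $ z = g y $ b $ z"
  by (simp add: matrix_vector_mult_basis column_def g_sym)

lemma Mx_formula:
  assumes x: "x \<in> U"
  shows "Mx b x = \<beta>\<^sup>2 *\<^sub>R (outer (\<xi> x) (g x *v axis b 1) - outer (axis b 1) (\<eta> x))"
proof -
  have "g x ** Mx b x = g x ** (\<beta>\<^sup>2 *\<^sub>R (outer (\<xi> x) (g x *v axis b 1) - outer (axis b 1) (\<eta> x)))"
  proof -
    have "(g x ** Mx b x) $ d $ z = (g x ** (\<beta>\<^sup>2 *\<^sub>R (outer (\<xi> x) (g x *v axis b 1) - outer (axis b 1) (\<eta> x)))) $ d $ z" for d z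
    proof -
      have "(g x ** Mx b x) $ d $ z = (\<Sum>c\<in>UNIV. \<xi> x $ c * Rl x d z b c)"
        unfolding Mx_def mm_sum_l mm_scale_l Rl_def by (simp add: sum_component)
      also have "\<dots> = (\<Sum>c\<in>UNIV. \<xi> x $ c * Rl x b c d z)" using Rl_pair[OF x] by simp
      also have "\<dots> = ((g x ** Rm d z x) *v \<xi> x) $ b"
        unfolding Rl_def by (simp add: matrix_vector_mult_def mult.commute)
      also have "\<dots> = (g x *v (Rm d z x *v \<xi> x)) $ b" by (simp add: matrix_vector_mul_assoc)
      also have "\<dots> = \<beta>\<^sup>2 * (\<eta> x $ d * g x $ b $ z - \<eta> x $ z * g x $ b $ d)"
        unfolding Rm_xi[OF x]
        by (simp add: matrix_vector_right_distrib matrix_vector_mult_diff_distrib matrix_vector_mult_scaleR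
            matrix_vector_mult_basis column_def algebra_simps)
      also have "\<dots> = (g x ** (\<beta>\<^sup>2 *\<^sub>R (outer (\<xi> x) (g x *v axis b 1) - outer (axis b 1) (\<eta> x)))) $ d $ z"
        by (simp add: mm_scale_l mm_diff_l outer_mm_l outer_nth g_xi[OF x] g_col_row[OF x]
            matrix_vector_mult_basis column_def g_sym[OF x, of d b] g_sym[OF x, of z b] algebra_simps)
      finally show ?thesis .
    qed
    then show ?thesis by (simp add: vec_eq_iff)
  qed
  then have "Gi x ** (g x ** Mx b x) = Gi x ** (g x ** (\<beta>\<^sup>2 *\<^sub>R (outer (\<xi> x) (g x *v axis b 1) - outer (axis b 1) (\<eta> x))))"
    by simp
  then show ?thesis by (simp add: matrix_mul_assoc Gi_g[OF x])
qed

end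


lemma two_times_mat: "(2::real^'n::finite^'m::finite) * M = (2::real) *\<^sub>R M"
  by (simp add: vec_eq_iff)

context kenm begin

lemma Rm_diff: "y \<in> U \<Longrightarrow> Rm a b differentiable at y" using smooth_diff[OF Rm_smooth] .

lemma pder_Mx_formula:
  assumes x: "x \<in> U"
  shows "pder [a] (Mx b) x = \<beta>\<^sup>2 *\<^sub>R (outer (pder [a] \<xi> x) (g x *v axis b 1) + outer (\<xi> x) (pder [a] g x *v axis b 1)
        - outer (axis b 1) (pder [a] \<eta> x))"
proof -
  have dGb: "(\<lambda>y. g y *v axis b 1) differentiable at x" using diff_bil[OF bb_mv g_diff[OF x] differentiable_const] .
  have pGb: "pder [a] (\<lambda>y. g y *v axis b 1) x = pder [a] g x *v axis b 1"
    using pder_mv[OF g_diff[OF x] differentiable_const, of a "axis b 1"] by (simp add: pder_const)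
  have d1: "(\<lambda>y. outer (\<xi> y) (g y *v axis b 1)) differentiable at x" using diff_bil[OF bb_outer xi_diff[OF x] dGb] .
  have d2: "(\<lambda>y. outer (axis b 1) (\<eta> y)) differentiable at x" using diff_bil[OF bb_outer differentiable_const eta_diff[OF x]] .
  have d3: "(\<lambda>y. outer (\<xi> y) (g y *v axis b 1) - outer (axis b 1) (\<eta> y)) differentiable at x"
    using d1 d2 by (intro differentiable_diff) auto
  have "pder [a] (Mx b) x = pder [a] (\<lambda>y. \<beta>\<^sup>2 *\<^sub>R (outer (\<xi> y) (g y *v axis b 1) - outer (axis b 1) (\<eta> y))) x"
    by (rule pder_eq_on[OF U x]) (use Mx_formula in blast)
  also have "\<dots> = \<beta>\<^sup>2 *\<^sub>R (pder [a] (\<lambda>y. outer (\<xi> y) (g y *v axis b 1)) x - pder [a] (\<lambda>y. outer (axis b 1) (\<eta> y)) x)"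
    using pder_cscale[OF d3] pder_diff[OF d1 d2] by simp
  also have "pder [a] (\<lambda>y. outer (\<xi> y) (g y *v axis b 1)) x = outer (pder [a] \<xi> x) (g x *v axis b 1) + outer (\<xi> x) (pder [a] g x *v axis b 1)"
    using pder_bilinear[OF bb_outer xi_diff[OF x] dGb] pGb by simp
  also have "pder [a] (\<lambda>y. outer (axis b 1) (\<eta> y)) x = outer (axis b 1) (pder [a] \<eta> x)"
    using pder_bilinear[OF bb_outer differentiable_const eta_diff[OF x]] by (simp add: pder_const outer_zero_l)
  finally show ?thesis by (simp add: algebra_simps)
qed

lemma pder_Mx_sum:
  assumes x: "x \<in> U"
  shows "pder [a] (Mx b) x = (\<Sum>c\<in>UNIV. pder [a] \<xi> x $ c *\<^sub>R Rm b c x + \<xi> x $ c *\<^sub>R pder [a] (Rm b c) x)"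
proof -
  have dn: "(\<lambda>y. \<xi> y $ c) differentiable at x" for c using diff_lin[OF bounded_linear_vec_nth xi_diff[OF x]] .
  have dc: "(\<lambda>y. \<xi> y $ c *\<^sub>R Rm b c y) differentiable at x" for c
    using diff_bil[OF bounded_bilinear_scaleR dn Rm_diff[OF x]] .
  have "pder [a] (Mx b) x = pder [a] (\<lambda>y. \<Sum>c\<in>UNIV. \<xi> y $ c *\<^sub>R Rm b c y) x"
    unfolding Mx_def[abs_def] by simp
  also have "\<dots> = (\<Sum>c\<in>UNIV. pder [a] (\<lambda>y. \<xi> y $ c *\<^sub>R Rm b c y) x)"
    by (rule pder_sum) (auto intro: dc)
  also have "\<dots> = (\<Sum>c\<in>UNIV. pder [a] \<xi> x $ c *\<^sub>R Rm b c x + \<xi> x $ c *\<^sub>R pder [a] (Rm b c) x)"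
    by (rule sum.cong) (auto simp: pder_scaleR[OF dn Rm_diff[OF x]] pder_nth[OF xi_diff[OF x]])
  finally show ?thesis .
qed

lemma X_formula_raw:
  assumes x: "x \<in> U"
  shows "(\<Sum>c\<in>UNIV. \<xi> x $ c *\<^sub>R DR a b c x)
       = pder [a] (Mx b) x + Gam a x ** Mx b x - Mx b x ** Gam a x - (\<Sum>l\<in>UNIV. Gam a x $ l $ b *\<^sub>R Mx l x)
         - (\<Sum>l\<in>UNIV. cd a \<xi> x $ l *\<^sub>R Rm b l x)"
proof -
  have S2: "(\<Sum>c\<in>UNIV. \<xi> x $ c *\<^sub>R DRt a b c x) = (pder [a] (Mx b) x - (\<Sum>c\<in>UNIV. pder [a] \<xi> x $ c *\<^sub>R Rm b c x))
        + Gam a x ** Mx b x - Mx b x ** Gam a x"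
    unfolding DRt_def pder_Mx_sum[OF x] Mx_def
    by (simp add: scaleR_add_right scaleR_diff_right sum.distrib sum_subtractf mm_sum_l mm_sum_r mm_scale_l mm_scale_r)
  have S3: "(\<Sum>c\<in>UNIV. \<xi> x $ c *\<^sub>R DRs1 a b c x) = (\<Sum>l\<in>UNIV. Gam a x $ l $ b *\<^sub>R Mx l x)"
  proof -
    have "(\<Sum>c\<in>UNIV. \<xi> x $ c *\<^sub>R DRs1 a b c x) = (\<Sum>c\<in>UNIV. \<Sum>l\<in>UNIV. Gam a x $ l $ b *\<^sub>R (\<xi> x $ c *\<^sub>R Rm l c x))"
      unfolding DRs1_def by (simp add: scaleR_sum_right mult.commute)
    also have "\<dots> = (\<Sum>l\<in>UNIV. \<Sum>c\<in>UNIV. Gam a x $ l $ b *\<^sub>R (\<xi> x $ c *\<^sub>R Rm l c x))" by (rule sum.swap)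
    finally show ?thesis unfolding Mx_def by (simp add: scaleR_sum_right)
  qed
  have S4: "(\<Sum>c\<in>UNIV. \<xi> x $ c *\<^sub>R DRs2 a b c x) = (\<Sum>l\<in>UNIV. (Gam a x *v \<xi> x) $ l *\<^sub>R Rm b l x)"
  proof -
    have "(\<Sum>c\<in>UNIV. \<xi> x $ c *\<^sub>R DRs2 a b c x) = (\<Sum>c\<in>UNIV. \<Sum>l\<in>UNIV. (Gam a x $ l $ c * \<xi> x $ c) *\<^sub>R Rm b l x)"
      unfolding DRs2_def by (simp add: scaleR_sum_right mult.commute)
    also have "\<dots> = (\<Sum>l\<in>UNIV. \<Sum>c\<in>UNIV. (Gam a x $ l $ c * \<xi> x $ c) *\<^sub>R Rm b l x)" by (rule sum.swap)
    finally show ?thesis by (simp add: matrix_vector_mult_def scaleR_sum_left)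
  qed
  have "(\<Sum>c\<in>UNIV. \<xi> x $ c *\<^sub>R DR a b c x) = (\<Sum>c\<in>UNIV. \<xi> x $ c *\<^sub>R DRt a b c x)
     - (\<Sum>c\<in>UNIV. \<xi> x $ c *\<^sub>R DRs1 a b c x) - (\<Sum>c\<in>UNIV. \<xi> x $ c *\<^sub>R DRs2 a b c x)"
    unfolding DR_def by (simp add: scaleR_diff_right sum_subtractf)
  also have "\<dots> = pder [a] (Mx b) x + Gam a x ** Mx b x - Mx b x ** Gam a x - (\<Sum>l\<in>UNIV. Gam a x $ l $ b *\<^sub>R Mx l x)
         - ((\<Sum>c\<in>UNIV. pder [a] \<xi> x $ c *\<^sub>R Rm b c x) + (\<Sum>l\<in>UNIV. (Gam a x *v \<xi> x) $ l *\<^sub>R Rm b l x))"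
    unfolding S2 S3 S4 by (simp add: algebra_simps)
  also have "(\<Sum>c\<in>UNIV. pder [a] \<xi> x $ c *\<^sub>R Rm b c x) + (\<Sum>l\<in>UNIV. (Gam a x *v \<xi> x) $ l *\<^sub>R Rm b l x)
      = (\<Sum>l\<in>UNIV. cd a \<xi> x $ l *\<^sub>R Rm b l x)"
    unfolding cd_def by (simp add: sum.distrib[symmetric] scaleR_add_left)
  finally show ?thesis .
qed


lemma T5:
  assumes x: "x \<in> U"
  shows "(\<Sum>l\<in>UNIV. cd a \<xi> x $ l *\<^sub>R Rm b l x) = \<beta> *\<^sub>R Rm b a x - (\<beta> * \<eta> x $ a) *\<^sub>R Mx b x"
proof -
  have "(\<Sum>l\<in>UNIV. cd a \<xi> x $ l *\<^sub>R Rm b l x) = (\<Sum>l\<in>UNIV. \<beta> *\<^sub>R (axis a 1 $ l *\<^sub>R Rm b l x) - (\<beta> * \<eta> x $ a) *\<^sub>R (\<xi> x $ l *\<^sub>R Rm b l x))"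
    unfolding cd_xi[OF x] by (rule sum.cong) (auto simp: algebra_simps)
  also have "\<dots> = \<beta> *\<^sub>R (\<Sum>l\<in>UNIV. axis a 1 $ l *\<^sub>R Rm b l x) - (\<beta> * \<eta> x $ a) *\<^sub>R Mx b x"
    unfolding Mx_def by (simp add: sum_subtractf scaleR_sum_right)
  also have "(\<Sum>l\<in>UNIV. axis a 1 $ l *\<^sub>R Rm b l x) = Rm b a x" by (rule sum_axis_scale)
  finally show ?thesis .
qed

lemma T6:
  assumes x: "x \<in> U"
  shows "(\<Sum>l\<in>UNIV. Gam a x $ l $ b *\<^sub>R Mx l x)
     = \<beta>\<^sup>2 *\<^sub>R (outer (\<xi> x) (g x *v (Gam a x *v axis b 1)) - outer (Gam a x *v axis b 1) (\<eta> x))"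
proof -
  have "(\<Sum>l\<in>UNIV. Gam a x $ l $ b *\<^sub>R Mx l x)
     = \<beta>\<^sup>2 *\<^sub>R ((\<Sum>l\<in>UNIV. Gam a x $ l $ b *\<^sub>R outer (\<xi> x) (g x *v axis l 1)) - (\<Sum>l\<in>UNIV. Gam a x $ l $ b *\<^sub>R outer (axis l 1) (\<eta> x)))"
    unfolding Mx_formula[OF x] by (simp add: scaleR_sum_right sum_subtractf algebra_simps)
  also have "\<dots> = \<beta>\<^sup>2 *\<^sub>R (outer (\<xi> x) (g x *v (Gam a x *v axis b 1)) - outer (Gam a x *v axis b 1) (\<eta> x))"
    unfolding outer_sum_r outer_sum_l mv_sum col_sum ..
  finally show ?thesis .
qed

lemma X_formula:
  assumes x: "x \<in> U"
  shows "(\<Sum>c\<in>UNIV. \<xi> x $ c *\<^sub>R DR a b c x)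
     = \<beta>^3 *\<^sub>R (outer (axis a 1 - (\<eta> x $ a) *\<^sub>R \<xi> x) (g x *v axis b 1) - outer (axis b 1) (g x *v axis a 1 - (\<eta> x $ a) *\<^sub>R \<eta> x))
       - \<beta> *\<^sub>R (Rm b a x - (\<eta> x $ a) *\<^sub>R Mx b x)"
  unfolding X_formula_raw[OF x] T5[OF x] T6[OF x] pder_Mx_formula[OF x]
  unfolding Mx_formula[OF x] metric_compat[OF x] pder_xi[OF x] pder_eta[OF x]
  by (simp add: outer_simps mm_simps matrix_vector_mult_add_rdistrib matrix_vector_right_distrib
      matrix_vector_mult_diff_distrib matrix_vector_mult_scaleR matrix_vector_mul_assoc[symmetric]
      g_xi[OF x] power2_eq_square power3_eq_cube algebra_simps)

lemma T_formula:
  assumes x: "x \<in> U"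
  shows "(\<Sum>c\<in>UNIV. \<xi> x $ c *\<^sub>R DR c a b x)
     = (- 2 * \<beta>) *\<^sub>R Rm a b x + (2 * \<beta>^3) *\<^sub>R (outer (axis b 1) (g x *v axis a 1) - outer (axis a 1) (g x *v axis b 1))"
proof -
  have "(\<Sum>c\<in>UNIV. \<xi> x $ c *\<^sub>R DR c a b x) = - (\<Sum>c\<in>UNIV. \<xi> x $ c *\<^sub>R DR a b c x) + (\<Sum>c\<in>UNIV. \<xi> x $ c *\<^sub>R DR b a c x)"
  proof -
    have "\<xi> x $ c *\<^sub>R DR c a b x = - (\<xi> x $ c *\<^sub>R DR a b c x) + \<xi> x $ c *\<^sub>R DR b a c x" for c
    proof -
      have "DR c a b x = (DR c a b x + DR a b c x + DR b c a x) - DR a b c x - DR b c a x" by simp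
      also have "\<dots> = - DR a b c x - DR b c a x" using bianchi2[OF x, of c a b] by simp
      also have "DR b c a x = - DR b a c x" by (rule DR_anti[OF x])
      finally have "DR c a b x = - DR a b c x + DR b a c x" by simp
      then show ?thesis by (simp add: scaleR_add_right scaleR_diff_right)
    qed
    then show ?thesis by (simp add: sum.distrib sum_negf sum_subtractf)
  qed
  also have "\<dots> = (- 2 * \<beta>) *\<^sub>R Rm a b x + (2 * \<beta>^3) *\<^sub>R (outer (axis b 1) (g x *v axis a 1) - outer (axis a 1) (g x *v axis b 1))"
    unfolding X_formula[OF x] Mx_formula[OF x] Rm_anti[of b a]
    by (simp add: outer_simps power2_eq_square power3_eq_cube algebra_simps two_times_mat)
  finally show ?thesis .
qed

end


context kenm begin

definition RicF :: "real^'m \<Rightarrow> real^'m^'m" where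
  "RicF y = (\<chi> i j. \<Sum>k\<in>UNIV. Rm k i y $ k $ j)"

lemma RicF_smooth: "smooth_on U RicF"
proof (rule smooth_mat[OF U])
  fix i j
  show "smooth_on U (\<lambda>y. RicF y $ i $ j)"
    unfolding RicF_def by (simp, intro smooth_sum[OF U] finite_class.finite_UNIV smooth_entries[OF U Rm_smooth])
qed

lemma RicF_diff: "y \<in> U \<Longrightarrow> RicF differentiable at y" using smooth_diff[OF RicF_smooth] .

lemma ricci_RicF: "y \<in> U \<Longrightarrow> ricci_mat g y = RicF y"
  by (simp add: vec_eq_iff RicF_def ricci_coord)

lemma pder_RicF:
  assumes x: "x \<in> U"
  shows "pder [c] RicF x $ i $ j = (\<Sum>k\<in>UNIV. pder [c] (Rm k i) x $ k $ j)"
proof -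
  have "pder [c] RicF x $ i $ j = pder [c] (\<lambda>y. RicF y $ i $ j) x" by (rule pder_entry[OF RicF_diff[OF x], symmetric])
  also have "\<dots> = pder [c] (\<lambda>y. \<Sum>k\<in>UNIV. Rm k i y $ k $ j) x" unfolding RicF_def by simp
  also have "\<dots> = (\<Sum>k\<in>UNIV. pder [c] (\<lambda>y. Rm k i y $ k $ j) x)"
    by (rule pder_sum) (auto intro!: diff_lin[OF bounded_linear_vec_nth] Rm_diff[OF x])
  also have "\<dots> = (\<Sum>k\<in>UNIV. pder [c] (Rm k i) x $ k $ j)"
    by (rule sum.cong) (auto simp: pder_entry[OF Rm_diff[OF x]])
  finally show ?thesis .
qed

lemma contraction:
  assumes x: "x \<in> U"
  shows "(\<Sum>k\<in>UNIV. DR c k i x $ k $ j) = (pder [c] RicF x - RicF x ** Gam c x - transpose (Gam c x) ** RicF x) $ i $ j"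
proof -
  have t1: "(\<Sum>k\<in>UNIV. DRt c k i x $ k $ j) = pder [c] RicF x $ i $ j + (\<Sum>k\<in>UNIV. (Gam c x ** Rm k i x) $ k $ j)
      - (RicF x ** Gam c x) $ i $ j"
  proof -
    have "(\<Sum>k\<in>UNIV. (Rm k i x ** Gam c x) $ k $ j) = (RicF x ** Gam c x) $ i $ j"
    proof -
      have "(\<Sum>k\<in>UNIV. (Rm k i x ** Gam c x) $ k $ j) = (\<Sum>k\<in>UNIV. \<Sum>l\<in>UNIV. Rm k i x $ k $ l * Gam c x $ l $ j)"
        by (simp add: matrix_matrix_mult_def)
      also have "\<dots> = (\<Sum>l\<in>UNIV. \<Sum>k\<in>UNIV. Rm k i x $ k $ l * Gam c x $ l $ j)" by (rule sum.swap)
      also have "\<dots> = (RicF x ** Gam c x) $ i $ j"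
        by (simp add: matrix_matrix_mult_def RicF_def sum_distrib_right)
      finally show ?thesis .
    qed
    then show ?thesis unfolding DRt_def by (simp add: pder_RicF[OF x] sum.distrib sum_subtractf)
  qed
  have t2: "(\<Sum>k\<in>UNIV. DRs1 c k i x $ k $ j) = (\<Sum>k\<in>UNIV. (Gam c x ** Rm k i x) $ k $ j)"
  proof -
    have "(\<Sum>k\<in>UNIV. DRs1 c k i x $ k $ j) = (\<Sum>k\<in>UNIV. \<Sum>l\<in>UNIV. Gam c x $ l $ k * Rm l i x $ k $ j)"
      by (simp add: DRs1_def sum_component)
    also have "\<dots> = (\<Sum>l\<in>UNIV. \<Sum>k\<in>UNIV. Gam c x $ l $ k * Rm l i x $ k $ j)" by (rule sum.swap)
    also have "\<dots> = (\<Sum>k\<in>UNIV. (Gam c x ** Rm k i x) $ k $ j)"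
      by (simp add: matrix_matrix_mult_def)
    finally show ?thesis .
  qed
  have t3: "(\<Sum>k\<in>UNIV. DRs2 c k i x $ k $ j) = (transpose (Gam c x) ** RicF x) $ i $ j"
  proof -
    have "(\<Sum>k\<in>UNIV. DRs2 c k i x $ k $ j) = (\<Sum>k\<in>UNIV. \<Sum>l\<in>UNIV. Gam c x $ l $ i * Rm k l x $ k $ j)"
      by (simp add: DRs2_def sum_component)
    also have "\<dots> = (\<Sum>l\<in>UNIV. \<Sum>k\<in>UNIV. Gam c x $ l $ i * Rm k l x $ k $ j)" by (rule sum.swap)
    also have "\<dots> = (transpose (Gam c x) ** RicF x) $ i $ j"
      by (simp add: matrix_matrix_mult_def RicF_def transpose_def sum_distrib_left)
    finally show ?thesis .
  qed
  show ?thesis unfolding DR_def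
    by (simp add: sum_subtractf t1 t2 t3)
qed

lemma nabla_xi_Ric:
  assumes x: "x \<in> U"
  shows "(\<Sum>c\<in>UNIV. \<xi> x $ c *\<^sub>R (pder [c] RicF x - RicF x ** Gam c x - transpose (Gam c x) ** RicF x))
     = (- 2 * \<beta>) *\<^sub>R RicF x - (4 * real n * \<beta>^3) *\<^sub>R g x"
proof -
  have "(\<Sum>c\<in>UNIV. \<xi> x $ c *\<^sub>R (pder [c] RicF x - RicF x ** Gam c x - transpose (Gam c x) ** RicF x)) $ i $ j
     = ((- 2 * \<beta>) *\<^sub>R RicF x - (4 * real n * \<beta>^3) *\<^sub>R g x) $ i $ j" for i j
  proof -
    have "(\<Sum>c\<in>UNIV. \<xi> x $ c *\<^sub>R (pder [c] RicF x - RicF x ** Gam c x - transpose (Gam c x) ** RicF x)) $ i $ j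
        = (\<Sum>c\<in>UNIV. \<xi> x $ c * (\<Sum>k\<in>UNIV. DR c k i x $ k $ j))"
      by (simp add: sum_component contraction[OF x])
    also have "\<dots> = (\<Sum>c\<in>UNIV. \<Sum>k\<in>UNIV. \<xi> x $ c * DR c k i x $ k $ j)"
      by (simp add: sum_distrib_left)
    also have "\<dots> = (\<Sum>k\<in>UNIV. \<Sum>c\<in>UNIV. \<xi> x $ c * DR c k i x $ k $ j)"
      by (rule sum.swap)
    also have "\<dots> = (\<Sum>k\<in>UNIV. (\<Sum>c\<in>UNIV. \<xi> x $ c *\<^sub>R DR c k i x) $ k $ j)"
      by (simp add: sum_component)
    also have "\<dots> = (\<Sum>k\<in>UNIV. ((- 2 * \<beta>) *\<^sub>R Rm k i x + (2 * \<beta>^3) *\<^sub>R (outer (axis i 1) (g x *v axis k 1) - outer (axis k 1) (g x *v axis i 1))) $ k $ j)"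
      by (simp add: T_formula[OF x])
    also have "\<dots> = (- 2 * \<beta>) * RicF x $ i $ j + (2 * \<beta>^3) * ((\<Sum>k\<in>UNIV. axis i 1 $ k * g x $ j $ k) - real CARD('m) * g x $ j $ i)"
      by (simp add: outer_nth matrix_vector_mult_basis column_def RicF_def sum.distrib sum_subtractf sum_distrib_left sum_negf algebra_simps)
    also have "(\<Sum>k\<in>UNIV. axis i 1 $ k * g x $ j $ k) = g x $ j $ i"
    proof -
      have "(\<Sum>k\<in>UNIV. axis i 1 $ k * g x $ j $ k) = (\<Sum>k\<in>UNIV. if k = i then g x $ j $ k else 0)"
        by (rule sum.cong) (auto simp: axis_def)
      then show ?thesis by simp
    qed
    finally show ?thesis using card_m g_sym[OF x, of j i] by (simp add: algebra_simps)
  qed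
  then show ?thesis by (simp add: vec_eq_iff)
qed

end


lemma tr_zero: "transpose (0::real^'n::finite^'m::finite) = 0"
  by (simp add: transpose_def vec_eq_iff)

lemma tr_sum: "transpose (\<Sum>c\<in>S. (A c :: real^'n::finite^'m::finite)) = (\<Sum>c\<in>S. transpose (A c))"
  by (induction S rule: infinite_finite_induct) (auto simp: tr_add tr_zero)
lemma tr_scale: "transpose (c *\<^sub>R (A :: real^'n::finite^'m::finite)) = c *\<^sub>R transpose A"
  by (rule transpose_scalar)

lemma mat_cols_zero: "(\<And>j. (A::real^'n::finite^'m::finite) *v axis j 1 = 0) \<Longrightarrow> A = 0"
  by (simp add: vec_eq_iff matrix_vector_mult_basis column_def)

lemma mv_sum_l: "(\<Sum>c\<in>S. (A c :: real^'n::finite^'m::finite)) *v v = (\<Sum>c\<in>S. A c *v v)"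
  by (induction S rule: infinite_finite_induct) (auto simp: matrix_vector_mult_add_rdistrib)

context kenm begin

definition SF :: "real^'m \<Rightarrow> real^'m^'m" where "SF y = Gi y ** transpose (RicF y)"

lemma SF_smooth: "smooth_on U SF"
  unfolding SF_def[abs_def] by (intro smooth_mm[OF U] Gi_smooth smooth_transpose[OF U] RicF_smooth)

lemma SF_diff: "y \<in> U \<Longrightarrow> SF differentiable at y" using smooth_diff[OF SF_smooth] .

lemma sharp_SF: "y \<in> U \<Longrightarrow> ricci_sharp g y = SF y"
  unfolding ricci_sharp_def SF_def Gi_def by (simp add: ricci_RicF)

lemma gSF1: "y \<in> U \<Longrightarrow> g y ** SF y = transpose (RicF y)"
  unfolding SF_def by (simp add: matrix_mul_assoc g_Gi)

lemma gSF2: "y \<in> U \<Longrightarrow> g y ** (SF y ** M) = transpose (RicF y) ** M"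
  by (simp add: matrix_mul_assoc gSF1)

lemma g_pSF:
  assumes x: "x \<in> U"
  shows "g x ** pder [c] SF x = transpose (pder [c] RicF x) - pder [c] g x ** SF x"
proof -
  have "pder [c] (\<lambda>y. g y ** SF y) x = pder [c] (\<lambda>y. transpose (RicF y)) x"
    by (rule pder_eq_on[OF U x]) (use gSF1 in blast)
  then have "pder [c] g x ** SF x + g x ** pder [c] SF x = transpose (pder [c] RicF x)"
    using pder_mm[OF g_diff[OF x] SF_diff[OF x]] pder_transpose[OF RicF_diff[OF x]] by simp
  then show ?thesis by (simp add: algebra_simps)
qed

lemma Hm_zero:
  assumes H: "\<forall>X. smooth_on U X \<longrightarrow> (\<forall>x\<in>U.
           nabla g \<xi> (\<lambda>y. ricci_sharp g y *v X y) x - ricci_sharp g x *v nabla g \<xi> X x = 0)"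
    and x: "x \<in> U"
  shows "(\<Sum>c\<in>UNIV. \<xi> x $ c *\<^sub>R (pder [c] SF x + Gam c x ** SF x - SF x ** Gam c x)) = 0"
proof (rule mat_cols_zero)
  fix j
  define F where "F y = ricci_sharp g y *v axis j 1" for y
  define Fj where "Fj y = SF y *v axis j 1" for y
  have eF: "\<forall>y\<in>U. F y = Fj y" unfolding F_def Fj_def using sharp_SF by simp
  have dFj: "Fj differentiable at x" unfolding Fj_def[abs_def] using diff_bil[OF bb_mv SF_diff[OF x] differentiable_const] .
  have dF: "F differentiable at x" using diff_local[OF U x eF] dFj by simp
  have pFj: "pder [c] Fj x = pder [c] SF x *v axis j 1" for c
    unfolding Fj_def[abs_def] using pder_mv[OF SF_diff[OF x] differentiable_const, of c "axis j 1"] by (simp add: pder_const)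
  have 1: "nabla g \<xi> F x = (\<Sum>c\<in>UNIV. \<xi> x $ c *\<^sub>R (pder [c] SF x *v axis j 1 + Gam c x *v (SF x *v axis j 1)))"
  proof -
    have "nabla g \<xi> F x = (\<Sum>c\<in>UNIV. \<xi> x $ c *\<^sub>R cd c F x)" by (rule nabla_exp[OF dF])
    also have "\<dots> = (\<Sum>c\<in>UNIV. \<xi> x $ c *\<^sub>R cd c Fj x)" using cd_local[OF eF x] by simp
    also have "\<dots> = (\<Sum>c\<in>UNIV. \<xi> x $ c *\<^sub>R (pder [c] SF x *v axis j 1 + Gam c x *v (SF x *v axis j 1)))"
      unfolding cd_def pFj by (simp add: Fj_def)
    finally show ?thesis .
  qed
  have 2: "nabla g \<xi> (coord j) x = (\<Sum>c\<in>UNIV. \<xi> x $ c *\<^sub>R (Gam c x *v axis j 1))"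
  proof -
    have dc: "coord j differentiable at x" unfolding coord_def by simp
    have e: "cd c (coord j) x = Gam c x *v axis j 1" for c
      unfolding cd_def coord_def by (simp add: pder_const)
    show ?thesis unfolding nabla_exp[OF dc] e ..
  qed
  have "nabla g \<xi> F x - ricci_sharp g x *v nabla g \<xi> (coord j) x = 0"
    using H[rule_format, OF coord_smooth[of j] x] unfolding F_def by (simp add: coord_def)
  then have "(\<Sum>c\<in>UNIV. \<xi> x $ c *\<^sub>R (pder [c] SF x *v axis j 1 + Gam c x *v (SF x *v axis j 1)))
      - SF x *v (\<Sum>c\<in>UNIV. \<xi> x $ c *\<^sub>R (Gam c x *v axis j 1)) = 0"
    unfolding 1 2 sharp_SF[OF x] .
  moreover have "(\<Sum>c\<in>UNIV. \<xi> x $ c *\<^sub>R (pder [c] SF x + Gam c x ** SF x - SF x ** Gam c x)) *v axis j 1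
     = (\<Sum>c\<in>UNIV. \<xi> x $ c *\<^sub>R (pder [c] SF x *v axis j 1 + Gam c x *v (SF x *v axis j 1)))
      - SF x *v (\<Sum>c\<in>UNIV. \<xi> x $ c *\<^sub>R (Gam c x *v axis j 1))"
  proof -
    have "(\<Sum>c\<in>UNIV. \<xi> x $ c *\<^sub>R (pder [c] SF x + Gam c x ** SF x - SF x ** Gam c x)) *v axis j 1
      = (\<Sum>c\<in>UNIV. (\<xi> x $ c *\<^sub>R (pder [c] SF x + Gam c x ** SF x - SF x ** Gam c x)) *v axis j 1)"
      by (rule mv_sum_l)
    also have "\<dots> = (\<Sum>c\<in>UNIV. \<xi> x $ c *\<^sub>R (pder [c] SF x *v axis j 1 + Gam c x *v (SF x *v axis j 1))
          - \<xi> x $ c *\<^sub>R (SF x *v (Gam c x *v axis j 1)))"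
      by (rule sum.cong) (simp_all add: mv_scale_l matrix_vector_mult_add_rdistrib matrix_vector_mult_diff_rdistrib
            matrix_vector_mul_assoc scaleR_diff_right)
    also have "\<dots> = (\<Sum>c\<in>UNIV. \<xi> x $ c *\<^sub>R (pder [c] SF x *v axis j 1 + Gam c x *v (SF x *v axis j 1)))
      - (\<Sum>c\<in>UNIV. \<xi> x $ c *\<^sub>R (SF x *v (Gam c x *v axis j 1)))"
      by (rule sum_subtractf)
    also have "(\<Sum>c\<in>UNIV. \<xi> x $ c *\<^sub>R (SF x *v (Gam c x *v axis j 1))) = SF x *v (\<Sum>c\<in>UNIV. \<xi> x $ c *\<^sub>R (Gam c x *v axis j 1))"
      by (rule mv_sum)
    finally show ?thesis .
  qed
  ultimately show "(\<Sum>c\<in>UNIV. \<xi> x $ c *\<^sub>R (pder [c] SF x + Gam c x ** SF x - SF x ** Gam c x)) *v axis j 1 = 0"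
    by simp
qed


lemma Ric_einstein:
  assumes H: "\<forall>X. smooth_on U X \<longrightarrow> (\<forall>x\<in>U.
           nabla g \<xi> (\<lambda>y. ricci_sharp g y *v X y) x - ricci_sharp g x *v nabla g \<xi> X x = 0)"
    and x: "x \<in> U" and b: "\<beta> \<noteq> 0"
  shows "RicF x = (- 2 * real n * \<beta>\<^sup>2) *\<^sub>R g x"
proof -
  have trm: "transpose (g x ** (\<xi> x $ c *\<^sub>R (pder [c] SF x + Gam c x ** SF x - SF x ** Gam c x)))
     = \<xi> x $ c *\<^sub>R (pder [c] RicF x - RicF x ** Gam c x - transpose (Gam c x) ** RicF x)" for c
  proof -
    have "g x ** (pder [c] SF x + Gam c x ** SF x - SF x ** Gam c x)
        = transpose (pder [c] RicF x) - transpose (Gam c x) ** transpose (RicF x) - transpose (RicF x) ** Gam c x"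
      unfolding mm_add_l mm_diff_l g_pSF[OF x] metric_compat[OF x]
      by (simp add: mm_add_r mm_assoc gSF1[OF x] gSF2[OF x])
    then show ?thesis by (simp add: mm_scale_l tr_scale tr_add tr_diff tr_mm)
  qed
  have "0 = transpose (g x ** (\<Sum>c\<in>UNIV. \<xi> x $ c *\<^sub>R (pder [c] SF x + Gam c x ** SF x - SF x ** Gam c x)))"
    using Hm_zero[OF H x] by (simp add: mm_zero_r tr_zero)
  also have "\<dots> = (\<Sum>c\<in>UNIV. \<xi> x $ c *\<^sub>R (pder [c] RicF x - RicF x ** Gam c x - transpose (Gam c x) ** RicF x))"
    unfolding mm_sum_l tr_sum trm ..
  also have "\<dots> = (- 2 * \<beta>) *\<^sub>R RicF x - (4 * real n * \<beta>^3) *\<^sub>R g x" by (rule nabla_xi_Ric[OF x])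
  finally have e: "(2 * \<beta>) *\<^sub>R RicF x = (- 4 * real n * \<beta>^3) *\<^sub>R g x" by (simp add: algebra_simps)
  have "RicF x = (1 / (2 * \<beta>)) *\<^sub>R ((2 * \<beta>) *\<^sub>R RicF x)" using b by simp
  also have "\<dots> = (- 2 * real n * \<beta>\<^sup>2) *\<^sub>R g x" unfolding e using b
    by (simp add: power2_eq_square power3_eq_cube field_simps)
  finally show ?thesis .
qed

lemma scal_val:
  assumes x: "x \<in> U" and R: "ricci_mat g x = c *\<^sub>R g x"
  shows "scal g x = c * real (2 * n + 1)"
proof -
  have "scal g x = (\<Sum>i\<in>UNIV. \<Sum>j\<in>UNIV. Gi x $ i $ j * (c * g x $ i $ j))"
    unfolding scal_def R Gi_def by simp
  also have "\<dots> = c * (\<Sum>i\<in>UNIV. (Gi x ** g x) $ i $ i)"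
    by (simp add: matrix_matrix_mult_def sum_distrib_left g_sym[OF x] algebra_simps)
  also have "\<dots> = c * real CARD('m)" by (simp add: Gi_g[OF x] mat_def)
  finally show ?thesis using card_m by simp
qed

end

theorem mainTheorem17:
  fixes n :: nat and U :: "(real^'m::finite) set" and \<beta> :: real
    and f Q g :: "real^'m \<Rightarrow> real^'m^'m" and \<xi> \<eta> :: "real^'m \<Rightarrow> real^'m"
  assumes "weak_beta_kenmotsu n U \<beta> f Q \<xi> \<eta> g"
    and "\<beta> \<noteq> 0"
    and "\<forall>X. smooth_on U X \<longrightarrow> (\<forall>x\<in>U.
           nabla g \<xi> (\<lambda>y. ricci_sharp g y *v X y) x - ricci_sharp g x *v nabla g \<xi> X x = 0)"
  shows "\<forall>x\<in>U. ricci_mat g x = (- 2 * real n * \<beta>\<^sup>2) *\<^sub>R g x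
           \<and> scal g x = - 2 * real n * (2 * real n + 1) * \<beta>\<^sup>2"
proof -
  have w: "weak_almost_contact_metric n U f Q \<xi> \<eta> g" using assms(1) unfolding weak_beta_kenmotsu_def by blast
  have U: "open U" and rm: "riemannian_metric_on U g" using w unfolding weak_almost_contact_metric_def by blast+
  interpret K: kenm U g n \<beta> f Q \<xi> \<eta>
    by (unfold_locales) (rule U, rule rm, rule assms(1))
  show ?thesis
  proof
    fix x assume x: "x \<in> U"
    have R: "ricci_mat g x = (- 2 * real n * \<beta>\<^sup>2) *\<^sub>R g x"
      using K.ricci_RicF[OF x] K.Ric_einstein[OF assms(3) x assms(2)] by simp
    have "scal g x = (- 2 * real n * \<beta>\<^sup>2) * real (2 * n + 1)" by (rule K.scal_val[OF x R])
    then show "ricci_mat g x = (- 2 * real n * \<beta>\<^sup>2) *\<^sub>R g x \<and> scal g x = - 2 * real n * (2 * real n + 1) * \<beta>\<^sup>2"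
      using R by (simp add: algebra_simps)
  qed
qed


end
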